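(* Let $L$ be a positive integer, $A,B>0$, $a,b\in\mathbb R$. Let $x_1,\ldots,x_n\in\{-L,\ldots,L\}$, let $m<n$ and $\{i_1,\ldots,i_m\}\subset\{1,\ldots,n\}$, and put $y_k=x_{i_k}$. Then the law $\mathbb P^L_{x_1,\ldots,x_n}$ of the Label Process started from $n$ distinct labelled particles at $x_1,\ldots,x_n$, restricted to the class of events that depend only on the trajectories of the particles initially located at $x_{i_1},\ldots,x_{i_m}$, coincides with $\mathbb P^L_{y_1,\ldots,y_m}$. In particular, for any $1\le i\le n$ and any $\varepsilon_1,\ldots,\varepsilon_n\in\{\delta(-),\delta(+)\}$, $$\sum_{\varepsilon_i\in\{\delta(-),\delta(+)\}}p_L(x_1,\ldots,x_n;\varepsilon_1,\ldots,\varepsilon_n)=p_L(x_1,\ldots,x_{i-1},x_{i+1},\ldots,x_n;\varepsilon_1,\ldots,\varepsilon_{i-1},\varepsilon_{i+1},\ldots,\varepsilon_n).$$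
   Context: The Label Process on sites $\{-L,\ldots,L\}\cup\{\delta(-),\delta(+)\}$ evolves finitely many distinguishable (labelled) particles; several particles may occupy the same site. Each bond $\{k,k+1\}$, $k=-L,\ldots,L-1$, carries an independent rate-one Poisson clock; when it rings, with $N$ particles in total on sites $k,k+1$, one fixes a bijection between these particles and $\{1,\ldots,N\}$, chooses $U$ uniformly in $\{0,\ldots,N\}$ and independently a uniform permutation $\zeta$ of $\{1,\ldots,N\}$, and sends the particles corresponding to the first $U$ positions of $\zeta$ to site $k$ and the rest to site $k+1$. An independent Poisson clock of rate $A/L^a$ at site $-L$, when it rings, moves all particles at $-L$ to $\delta(-)$, and one of rate $B/L^b$ at site $L$ moves all particles at $L$ to $\delta(+)$; particles at $\delta(\pm)$ stay there forever. $\mathbb P^L_{x_1,\ldots,x_n}$ is the law of this process started with $n$ distinct particles at $x_1,\ldots,x_n$, and $p_L(x_1,\ldots,x_n;\varepsilon_1,\ldots,\varepsilon_n)$ is the $\mathbb P^L_{x_1,\ldots,x_n}$-probability that for every $i$ the particle starting at $x_i$ hits $\varepsilon_i$. *)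

theory Defs
  imports "HOL-Analysis.Analysis" "HOL-Probability.Probability_Mass_Function"
          "HOL-Combinatorics.Permutations"
begin

text \<open>Sites of the Label Process: S k for k in {-L..L}, Dm = delta(-), Dp = delta(+).
  A configuration of n labelled particles is a list of sites of length n
  (entry i = position of particle i).\<close>

datatype site = S int | Dm | Dp

definition sites :: "nat \<Rightarrow> site set" where
  "sites L = S ` {- int L .. int L} \<union> {Dm, Dp}"

definition states :: "nat \<Rightarrow> nat \<Rightarrow> site list set" where
  "states L n = {s. length s = n \<and> set s \<subseteq> sites L}"

definition bond_set :: "int \<Rightarrow> site list \<Rightarrow> nat set" where
  "bond_set k s = {i. i < length s \<and> (s ! i = S k \<or> s ! i = S (k + 1))}"

text \<open>The fixed bijection between the N particles on the bond and {1..N}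
  (order preserving in the labels).\<close>
definition lab :: "int \<Rightarrow> site list \<Rightarrow> nat \<Rightarrow> nat" where
  "lab k s i = card {j \<in> bond_set k s. j < i} + 1"

definition bond_move :: "int \<Rightarrow> site list \<Rightarrow> nat \<Rightarrow> (nat \<Rightarrow> nat) \<Rightarrow> site list" where
  "bond_move k s U \<zeta> =
     map (\<lambda>i. if i \<in> bond_set k s
               then (if lab k s i \<in> \<zeta> ` {1..U} then S k else S (k + 1))
               else s ! i) [0..<length s]"

definition bond_step :: "int \<Rightarrow> site list \<Rightarrow> site list pmf" where
  "bond_step k s =
     (let N = card (bond_set k s)
      in map_pmf (\<lambda>(U, \<zeta>). bond_move k s U \<zeta>)
           (pair_pmf (pmf_of_set {0..N}) (pmf_of_set {p. p permutes {1..N}})))"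

definition absorb_left :: "nat \<Rightarrow> site list \<Rightarrow> site list" where
  "absorb_left L s = map (\<lambda>z. if z = S (- int L) then Dm else z) s"

definition absorb_right :: "nat \<Rightarrow> site list \<Rightarrow> site list" where
  "absorb_right L s = map (\<lambda>z. if z = S (int L) then Dp else z) s"

text \<open>Total rate of all clocks (rate 1 per bond, A/L^a at -L, B/L^b at L).\<close>
definition total_rate :: "nat \<Rightarrow> real \<Rightarrow> real \<Rightarrow> real \<Rightarrow> real \<Rightarrow> real" where
  "total_rate L A B a b = 2 * real L + A / real L powr a + B / real L powr b"

text \<open>One-step kernel of the superposition of all clocks: the next ringing clock is
  chosen with probability proportional to its rate (uniformisation).\<close>
definition step_kernel ::
  "nat \<Rightarrow> real \<Rightarrow> real \<Rightarrow> real \<Rightarrow> real \<Rightarrow> site list \<Rightarrow> site list \<Rightarrow> real" where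
  "step_kernel L A B a b s s' =
     ((\<Sum>k\<in>{- int L .. int L - 1}. pmf (bond_step k s) s')
      + A / real L powr a * (if absorb_left L s = s' then 1 else 0)
      + B / real L powr b * (if absorb_right L s = s' then 1 else 0))
     / total_rate L A B a b"

primrec kernel_pow ::
  "nat \<Rightarrow> real \<Rightarrow> real \<Rightarrow> real \<Rightarrow> real \<Rightarrow> nat \<Rightarrow> site list \<Rightarrow> site list \<Rightarrow> real" where
  "kernel_pow L A B a b 0 s s' = (if s = s' then 1 else 0)"
| "kernel_pow L A B a b (Suc j) s s' =
     (\<Sum>u\<in>states L (length s). step_kernel L A B a b s u * kernel_pow L A B a b j u s')"

text \<open>Transition probability P(X_t = s' | X_0 = s) of the continuous-time process
  (all clocks superposed: Poisson(total_rate * t) many rings up to time t).\<close>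
definition trans_prob ::
  "nat \<Rightarrow> real \<Rightarrow> real \<Rightarrow> real \<Rightarrow> real \<Rightarrow> real \<Rightarrow> site list \<Rightarrow> site list \<Rightarrow> real" where
  "trans_prob L A B a b t s s' =
     (\<Sum>j. exp (- total_rate L A B a b * t) * (total_rate L A B a b * t) ^ j / fact j
            * kernel_pow L A B a b j s s')"

text \<open>Finite-dimensional distributions: probability, started from s at time t0,
  that X_{t_j} = s_j for all observations (t_j, s_j), times nondecreasing.\<close>
fun fdd ::
  "nat \<Rightarrow> real \<Rightarrow> real \<Rightarrow> real \<Rightarrow> real \<Rightarrow> site list \<Rightarrow> real \<Rightarrow> (real \<times> site list) list \<Rightarrow> real" where
  "fdd L A B a b s t0 [] = 1"
| "fdd L A B a b s t0 ((t, u) # obs) =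
     trans_prob L A B a b (t - t0) s u * fdd L A B a b u t obs"

text \<open>P^L_{x_1..x_n} of the cylinder event: for all j, the particles initially at
  x_{i_1},...,x_{i_m} (index list is) are at the positions z_j at time t_j.\<close>
definition sub_fdd ::
  "nat \<Rightarrow> real \<Rightarrow> real \<Rightarrow> real \<Rightarrow> real \<Rightarrow> int list \<Rightarrow> nat list \<Rightarrow> (real \<times> site list) list \<Rightarrow> real" where
  "sub_fdd L A B a b x is obs =
     (\<Sum>ss\<in>{ss. length ss = length obs \<and> set ss \<subseteq> states L (length x)
               \<and> map (\<lambda>s. map (\<lambda>i. s ! i) is) ss = map snd obs}.
        fdd L A B a b (map S x) 0 (zip (map fst obs) ss))"

text \<open>p_L(x; eps): probability that each particle i is eventually absorbed at eps_i.
  Since delta(+-) are absorbing, this is lim_{t->oo} P_x(X_t = eps).\<close>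
definition p_L ::
  "nat \<Rightarrow> real \<Rightarrow> real \<Rightarrow> real \<Rightarrow> real \<Rightarrow> int list \<Rightarrow> site list \<Rightarrow> real" where
  "p_L L A B a b x eps = Lim at_top (\<lambda>t. trans_prob L A B a b t (map S x) eps)"

end

theory Submission
  imports Defs
begin

lemma exists_perm_image:
  assumes "finite X" "Q \<subseteq> X" "Q' \<subseteq> X" "card Q = card Q'"
  shows "\<exists>\<tau>. \<tau> permutes X \<and> \<tau> ` Q = Q'"
proof -
  have fQ: "finite Q" using assms(1,2) by (rule finite_subset[rotated])
  have fQ': "finite Q'" using assms(1,3) by (rule finite_subset[rotated])
  obtain f where f: "bij_betw f Q Q'" using finite_same_card_bij[OF fQ fQ' assms(4)] by blast
  have "card (X - Q) = card (X - Q')"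
    using assms fQ fQ' by (simp add: card_Diff_subset)
  moreover have "finite (X - Q)" "finite (X - Q')" using assms(1) by simp_all
  ultimately obtain g where g: "bij_betw g (X - Q) (X - Q')"
    using finite_same_card_bij by blast
  define \<tau> where "\<tau> x = (if x \<in> Q then f x else if x \<in> X then g x else x)" for x
  have "bij_betw \<tau> Q Q' = bij_betw f Q Q'" by (rule bij_betw_cong) (simp add: \<tau>_def)
  with f have b1: "bij_betw \<tau> Q Q'" by simp
  have "bij_betw \<tau> (X - Q) (X - Q') = bij_betw g (X - Q) (X - Q')" by (rule bij_betw_cong) (simp add: \<tau>_def)
  with g have b2: "bij_betw \<tau> (X - Q) (X - Q')" by simp
  have "bij_betw \<tau> (Q \<union> (X - Q)) (Q' \<union> (X - Q'))"
    by (rule bij_betw_combine[OF b1 b2]) blast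
  moreover have "Q \<union> (X - Q) = X" "Q' \<union> (X - Q') = X" using assms(2,3) by blast+
  ultimately have "bij_betw \<tau> X X" by simp
  moreover have "\<forall>x. x \<notin> X \<longrightarrow> \<tau> x = x" using assms(2) by (auto simp: \<tau>_def)
  ultimately have "\<tau> permutes X" using bij_imp_permutes by blast
  moreover have "\<tau> ` Q = Q'" using b1 by (simp add: bij_betw_def)
  ultimately show ?thesis by blast
qed

lemma fiber_card_eq:
  assumes "finite X" "I \<subseteq> X" "Q \<subseteq> X" "Q' \<subseteq> X" "card Q = card Q'"
  shows "card {\<zeta>. \<zeta> permutes X \<and> \<zeta> ` I = Q} \<le> card {\<zeta>. \<zeta> permutes X \<and> \<zeta> ` I = Q'}"
proof -
  obtain \<tau> where t: "\<tau> permutes X" "\<tau> ` Q = Q'" using exists_perm_image assms by metis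
  have fin: "finite {\<zeta>. \<zeta> permutes X \<and> \<zeta> ` I = Q'}"
    using finite_permutations[OF assms(1)] by (rule finite_subset[rotated]) auto
  show ?thesis
  proof (rule card_inj_on_le[OF _ _ fin])
    show "inj_on ((\<circ>) \<tau>) {\<zeta>. \<zeta> permutes X \<and> \<zeta> ` I = Q}"
    proof (rule inj_onI)
      fix z1 z2 :: "'a \<Rightarrow> 'a" assume "\<tau> \<circ> z1 = \<tau> \<circ> z2"
      hence "\<And>x. \<tau> (z1 x) = \<tau> (z2 x)" by (metis comp_apply)
      hence "\<And>x. z1 x = z2 x" using permutes_inj[OF t(1)] by (meson injD)
      thus "z1 = z2" by blast
    qed
    show "(\<circ>) \<tau> ` {\<zeta>. \<zeta> permutes X \<and> \<zeta> ` I = Q} \<subseteq> {\<zeta>. \<zeta> permutes X \<and> \<zeta> ` I = Q'}"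
    proof
      fix z assume "z \<in> (\<circ>) \<tau> ` {\<zeta>. \<zeta> permutes X \<and> \<zeta> ` I = Q}"
      then obtain \<zeta> where z: "z = \<tau> \<circ> \<zeta>" "\<zeta> permutes X" "\<zeta> ` I = Q" by blast
      have "z permutes X" using z permutes_compose[OF z(2) t(1)] by simp
      moreover have "z ` I = Q'" using z t(2) by (metis image_comp)
      ultimately show "z \<in> {\<zeta>. \<zeta> permutes X \<and> \<zeta> ` I = Q'}" by blast
    qed
  qed
qed

lemma perm_fiber_card:
  assumes "finite X" "I \<subseteq> X" "Q \<subseteq> X" "card Q = card I"
  shows "card {\<zeta>. \<zeta> permutes X \<and> \<zeta> ` I = Q} = fact (card I) * fact (card X - card I)"
proof -
  define c where "c = card {\<zeta>. \<zeta> permutes X \<and> \<zeta> ` I = Q}"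
  define Qs where "Qs = {B. B \<subseteq> X \<and> card B = card I}"
  have eq: "\<And>Q'. Q' \<in> Qs \<Longrightarrow> card {\<zeta>. \<zeta> permutes X \<and> \<zeta> ` I = Q'} = c"
    unfolding c_def Qs_def using assms
    by (intro antisym fiber_card_eq) auto
  have fP: "finite {\<zeta>. \<zeta> permutes X}" using finite_permutations[OF assms(1)] by simp
  have img: "(\<lambda>\<zeta>. \<zeta> ` I) ` {\<zeta>. \<zeta> permutes X} \<subseteq> Qs"
  proof safe
    fix \<zeta> assume p: "\<zeta> permutes X"
    show "\<zeta> ` I \<in> Qs" unfolding Qs_def
      using p assms permutes_inj[OF p] permutes_image[OF p]
      by (auto simp: card_image inj_on_subset[of \<zeta> UNIV I])
  qed
  have fQs: "finite Qs" unfolding Qs_def using assms(1) by auto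
  have "fact (card X) = card {\<zeta>. \<zeta> permutes X}" using card_permutations[OF refl assms(1)] by simp
  also have "\<dots> = (\<Sum>Q'\<in>Qs. card {\<zeta>\<in>{\<zeta>. \<zeta> permutes X}. \<zeta> ` I = Q'})"
    using sum.group[OF fP fQs img, of "\<lambda>_. 1::nat"] by simp
  also have "\<dots> = (\<Sum>Q'\<in>Qs. c)" using eq by (intro sum.cong) auto
  also have "\<dots> = (card X choose card I) * c" unfolding Qs_def using n_subsets[OF assms(1)] by simp
  finally have *: "fact (card X) = (card X choose card I) * c" .
  have le: "card I \<le> card X" using assms card_mono by blast
  have e2: "fact (card I) * fact (card X - card I) * (card X choose card I) = (fact (card X) :: nat)"
    using binomial_fact_lemma[OF le] .
  have "(card X choose card I) * c = (card X choose card I) * (fact (card I) * fact (card X - card I))"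
    unfolding *[symmetric] e2[symmetric] by (simp only: ac_simps)
  moreover have "(card X choose card I) > 0" using le by simp
  ultimately have "c = fact (card I) * fact (card X - card I)"
    by simp
  thus ?thesis unfolding c_def .
qed

definition F :: "nat \<Rightarrow> nat \<Rightarrow> real" where
  "F N j = fact j * fact (N - j) / fact (Suc N)"

definition cfg :: "int \<Rightarrow> site list \<Rightarrow> nat set \<Rightarrow> site list" where
  "cfg k s T = map (\<lambda>i. if i \<in> bond_set k s then (if i \<in> T then S k else S (k + 1)) else s ! i) [0..<length s]"

lemma finite_bond_set[simp]: "finite (bond_set k s)"
  by (rule finite_subset[of _ "{..<length s}"]) (auto simp: bond_set_def)

lemma lab_less:
  assumes "i \<in> bond_set k s" "i' \<in> bond_set k s" "i < i'"
  shows "lab k s i < lab k s i'"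
proof -
  have "{j \<in> bond_set k s. j < i} \<subset> {j \<in> bond_set k s. j < i'}"
    using assms by auto
  hence "card {j \<in> bond_set k s. j < i} < card {j \<in> bond_set k s. j < i'}"
    by (rule psubset_card_mono[rotated]) simp
  thus ?thesis by (simp add: lab_def)
qed

lemma lab_inj: "inj_on (lab k s) (bond_set k s)"
proof (rule inj_onI)
  fix i i' assume "i \<in> bond_set k s" "i' \<in> bond_set k s" "lab k s i = lab k s i'"
  thus "i = i'" using lab_less[of i k s i'] lab_less[of i' k s i]
    by (metis less_irrefl nat_neq_iff)
qed

lemma lab_bij: "bij_betw (lab k s) (bond_set k s) {1..card (bond_set k s)}"
proof -
  have sub: "lab k s ` bond_set k s \<subseteq> {1..card (bond_set k s)}"
  proof
    fix y assume "y \<in> lab k s ` bond_set k s"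
    then obtain i where i: "i \<in> bond_set k s" "y = lab k s i" by auto
    have "{j \<in> bond_set k s. j < i} \<subset> bond_set k s" using i by auto
    hence "card {j \<in> bond_set k s. j < i} < card (bond_set k s)"
      by (rule psubset_card_mono[rotated]) simp
    thus "y \<in> {1..card (bond_set k s)}" using i by (simp add: lab_def)
  qed
  have "card (lab k s ` bond_set k s) = card {1..card (bond_set k s)}"
    using card_image[OF lab_inj] by simp
  hence "lab k s ` bond_set k s = {1..card (bond_set k s)}"
    using card_subset_eq[OF _ sub] by simp
  thus ?thesis using lab_inj by (simp add: bij_betw_def)
qed

lemma bond_move_cfg:
  "bond_move k s U \<zeta> = cfg k s {i \<in> bond_set k s. lab k s i \<in> \<zeta> ` {1..U}}"
  unfolding bond_move_def cfg_def by (intro map_cong) auto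

lemma cfg_eq_iff:
  "cfg k s T = cfg k s T' \<longleftrightarrow> T \<inter> bond_set k s = T' \<inter> bond_set k s"
proof
  assume "cfg k s T = cfg k s T'"
  hence "\<forall>i < length s. cfg k s T ! i = cfg k s T' ! i" by simp
  thus "T \<inter> bond_set k s = T' \<inter> bond_set k s"
    unfolding cfg_def by (auto simp: bond_set_def split: if_splits)
next
  assume "T \<inter> bond_set k s = T' \<inter> bond_set k s"
  hence "\<And>x. x \<in> bond_set k s \<Longrightarrow> x \<in> T \<longleftrightarrow> x \<in> T'" by blast
  thus "cfg k s T = cfg k s T'" unfolding cfg_def by (intro map_cong) auto
qed

lemma cfg_Int: "cfg k s T = cfg k s (T \<inter> bond_set k s)"
  by (simp add: cfg_eq_iff Int_assoc)

lemma length_cfg[simp]: "length (cfg k s T) = length s"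
  by (simp add: cfg_def)

lemma nth_cfg: "i < length s \<Longrightarrow> cfg k s T ! i =
   (if i \<in> bond_set k s then (if i \<in> T then S k else S (k + 1)) else s ! i)"
  by (simp add: cfg_def)

lemma set_pmf_bond_step: "set_pmf (bond_step k s) \<subseteq> cfg k s ` Pow (bond_set k s)"
proof -
  have "{p. p permutes {1..card (bond_set k s)}} \<noteq> {}" using permutes_id by blast
  moreover have "finite {p. p permutes {1..card (bond_set k s)}}"
    using finite_permutations[OF finite_atLeastAtMost] by simp
  ultimately show ?thesis
    unfolding bond_step_def Let_def by (auto simp: bond_move_cfg)
qed

lemma pmf_bond_not: "u \<notin> cfg k s ` Pow (bond_set k s) \<Longrightarrow> pmf (bond_step k s) u = 0"
  using set_pmf_bond_step[of k s] by (meson pmf_eq_0_set_pmf subsetD)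

lemma pmf_bond_cfg:
  assumes T: "T \<subseteq> bond_set k s"
  shows "pmf (bond_step k s) (cfg k s T) = F (card (bond_set k s)) (card T)"
proof -
  define N where "N = card (bond_set k s)"
  define Pm where "Pm = {p. p permutes {1..N}}"
  define g where "g = (\<lambda>(U, \<zeta>). bond_move k s U \<zeta>)"
  define j where "j = card T"
  have Pne: "Pm \<noteq> {}" unfolding Pm_def using permutes_id by blast
  have Pfin: "finite Pm" unfolding Pm_def using finite_permutations[OF finite_atLeastAtMost] by simp
  have cP: "card Pm = fact N" unfolding Pm_def using card_permutations[of "{1..N}" N] by simp
  let ?P = "pair_pmf (pmf_of_set {0..N}) (pmf_of_set Pm)"
  have bs: "bond_step k s = map_pmf g ?P"
    unfolding bond_step_def Let_def N_def Pm_def g_def by simp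
  have setP: "set_pmf ?P = {0..N} \<times> Pm" using Pne Pfin by simp
  have lT: "lab k s ` T \<subseteq> {1..N}" using lab_bij[of k s] T unfolding N_def bij_betw_def by auto
  have clT: "card (lab k s ` T) = j"
    unfolding j_def by (rule card_image) (rule inj_on_subset[OF lab_inj T])
  have jN: "j \<le> N" unfolding j_def N_def using card_mono[OF finite_bond_set T] by simp
  have E: "(g -` {cfg k s T}) \<inter> ({0..N} \<times> Pm) = {j} \<times> {\<zeta>. \<zeta> permutes {1..N} \<and> \<zeta> ` {1..j} = lab k s ` T}"
  proof (intro set_eqI iffI)
    fix x assume x: "x \<in> (g -` {cfg k s T}) \<inter> ({0..N} \<times> Pm)"
    obtain U \<zeta> where xe: "x = (U, \<zeta>)" by fastforce
    have U: "U \<le> N" and p: "\<zeta> permutes {1..N}" using x xe Pm_def by auto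
    have "cfg k s {i \<in> bond_set k s. lab k s i \<in> \<zeta> ` {1..U}} = cfg k s T"
      using x xe by (simp add: g_def bond_move_cfg)
    hence eqT: "{i \<in> bond_set k s. lab k s i \<in> \<zeta> ` {1..U}} = T"
      using T by (auto simp: cfg_eq_iff)
    have sub: "\<zeta> ` {1..U} \<subseteq> lab k s ` bond_set k s"
      using permutes_image[OF p] U lab_bij[of k s] unfolding N_def bij_betw_def by auto
    have im: "\<zeta> ` {1..U} = lab k s ` T"
    proof
      show "\<zeta> ` {1..U} \<subseteq> lab k s ` T"
      proof
        fix y assume y: "y \<in> \<zeta> ` {1..U}"
        then obtain i where "i \<in> bond_set k s" "y = lab k s i" using sub by blast
        thus "y \<in> lab k s ` T" using eqT y by blast
      qed
      show "lab k s ` T \<subseteq> \<zeta> ` {1..U}" using eqT by blast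
    qed
    have "card (\<zeta> ` {1..U}) = U"
      using card_image[OF inj_on_subset[OF permutes_inj[OF p], of "{1..U}"]] by simp
    hence "U = j" using im clT by simp
    thus "x \<in> {j} \<times> {\<zeta>. \<zeta> permutes {1..N} \<and> \<zeta> ` {1..j} = lab k s ` T}"
      using xe p im by simp
  next
    fix x assume x: "x \<in> {j} \<times> {\<zeta>. \<zeta> permutes {1..N} \<and> \<zeta> ` {1..j} = lab k s ` T}"
    obtain \<zeta> where xe: "x = (j, \<zeta>)" and p: "\<zeta> permutes {1..N}" and im: "\<zeta> ` {1..j} = lab k s ` T"
      using x by auto
    have "{i \<in> bond_set k s. lab k s i \<in> lab k s ` T} = T"
      using T inj_onD[OF lab_inj[of k s]] by blast
    hence "g x = cfg k s T" using xe im by (simp add: g_def bond_move_cfg)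
    thus "x \<in> (g -` {cfg k s T}) \<inter> ({0..N} \<times> Pm)" using xe p jN Pm_def by simp
  qed
  have cE: "card ((g -` {cfg k s T}) \<inter> ({0..N} \<times> Pm)) = fact j * fact (N - j)"
    unfolding E using perm_fiber_card[of "{1..N}" "{1..j}" "lab k s ` T"] lT clT jN
    by (simp add: card_cartesian_product)
  have fE: "finite ((g -` {cfg k s T}) \<inter> ({0..N} \<times> Pm))" using Pfin by auto
  have "pmf (bond_step k s) (cfg k s T) = measure ?P (g -` {cfg k s T})"
    unfolding bs pmf_map ..
  also have "\<dots> = measure ?P ((g -` {cfg k s T}) \<inter> set_pmf ?P)"
    by (rule measure_Int_set_pmf[symmetric])
  also have "\<dots> = (\<Sum>x\<in>(g -` {cfg k s T}) \<inter> ({0..N} \<times> Pm). pmf ?P x)"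
    unfolding setP by (rule measure_measure_pmf_finite[OF fE])
  also have "\<dots> = (\<Sum>x\<in>(g -` {cfg k s T}) \<inter> ({0..N} \<times> Pm). 1 / (real (Suc N) * fact N))"
    using cP by (intro sum.cong refl) (auto simp: pmf_pair pmf_of_set[OF Pne Pfin] indicator_def)
  also have "\<dots> = real (fact j * fact (N - j)) / (real (Suc N) * fact N)"
    using cE by simp
  also have "\<dots> = F N j" unfolding F_def by simp
  finally show ?thesis unfolding N_def j_def .
qed

definition proj :: "nat list \<Rightarrow> site list \<Rightarrow> site list" where
  "proj is s = map (\<lambda>i. s ! i) is"

lemma length_proj[simp]: "length (proj is s) = length is" by (simp add: proj_def)
lemma nth_proj[simp]: "p < length is \<Longrightarrow> proj is s ! p = s ! (is ! p)" by (simp add: proj_def)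

lemma bond_set_proj:
  assumes "set is \<subseteq> {..<length s}"
  shows "p \<in> bond_set k (proj is s) \<longleftrightarrow> p < length is \<and> is ! p \<in> bond_set k s"
proof -
  have "\<forall>p < length is. is ! p < length s" using assms nth_mem by fastforce
  thus ?thesis by (auto simp: bond_set_def)
qed

lemma proj_cfg:
  assumes "set is \<subseteq> {..<length s}"
  shows "proj is (cfg k s T) = cfg k (proj is s) {p. p < length is \<and> is ! p \<in> T}"
proof (rule nth_equalityI)
  show "length (proj is (cfg k s T)) = length (cfg k (proj is s) {p. p < length is \<and> is ! p \<in> T})"
    by simp
  fix p assume "p < length (proj is (cfg k s T))"
  hence p: "p < length is" by simp
  hence ip: "is ! p < length s" using assms nth_mem by fastforce
  show "proj is (cfg k s T) ! p = cfg k (proj is s) {p. p < length is \<and> is ! p \<in> T} ! p"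
    using p ip bond_set_proj[OF assms, of p k] by (simp add: nth_cfg)
qed

lemma F_step:
  assumes "j \<le> N"
  shows "F (Suc N) j + F (Suc N) (Suc j) = F N j"
proof -
  obtain d where N: "N = j + d" using assms le_Suc_ex by blast
  have X: "fact (Suc N) > (0::real)" by simp
  have e1: "F (Suc N) j = fact j * ((real d + 1) * fact d) / ((real N + 2) * fact (Suc N))"
    unfolding F_def N by (simp add: Suc_diff_le fact_Suc[of d] fact_Suc[of "Suc (j + d)"] algebra_simps)
  have e2: "F (Suc N) (Suc j) = ((real j + 1) * fact j) * fact d / ((real N + 2) * fact (Suc N))"
    unfolding F_def N by (simp add: fact_Suc[of j] fact_Suc[of "Suc (j + d)"] algebra_simps)
  have e3: "F N j = fact j * fact d / fact (Suc N)"
    unfolding F_def N by simp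
  have n2: "real N + 2 = (real d + 1) + (real j + 1)" using N by simp
  have "F (Suc N) j + F (Suc N) (Suc j) = fact j * fact d * ((real d + 1) + (real j + 1)) / ((real N + 2) * fact (Suc N))"
    unfolding e1 e2 by (simp add: add_divide_distrib[symmetric] algebra_simps)
  also have "\<dots> = (fact j * fact d * (real N + 2)) / (fact (Suc N) * (real N + 2))"
    unfolding n2[symmetric] by (simp only: mult.commute)
  also have "\<dots> = fact j * fact d / fact (Suc N)"
    by (rule mult_divide_mult_cancel_right) simp
  finally show ?thesis unfolding e3 .
qed

lemma F_sum_Pow:
  assumes "finite R" "q \<le> M"
  shows "(\<Sum>W\<in>Pow R. F (M + card R) (q + card W)) = F M q"
  using assms(1)
proof (induction R rule: finite_induct)
  case empty
  then show ?case by simp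
next
  case (insert a R)
  have disj: "Pow R \<inter> insert a ` Pow R = {}" using insert.hyps by auto
  have inj: "inj_on (insert a) (Pow R)" using insert.hyps by (auto simp: inj_on_def)
  have "(\<Sum>W\<in>Pow (insert a R). F (M + card (insert a R)) (q + card W))
      = (\<Sum>W\<in>Pow R. F (Suc (M + card R)) (q + card W))
        + (\<Sum>W\<in>insert a ` Pow R. F (Suc (M + card R)) (q + card W))"
    unfolding Pow_insert using insert.hyps disj
    by (simp add: sum.union_disjoint)
  also have "(\<Sum>W\<in>insert a ` Pow R. F (Suc (M + card R)) (q + card W))
      = (\<Sum>W\<in>Pow R. F (Suc (M + card R)) (Suc (q + card W)))"
    using inj insert.hyps
    by (simp add: sum.reindex) (intro sum.cong refl, auto simp: card_insert_if finite_subset)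
  also have "(\<Sum>W\<in>Pow R. F (Suc (M + card R)) (q + card W)) + \<dots>
      = (\<Sum>W\<in>Pow R. F (M + card R) (q + card W))"
    unfolding sum.distrib[symmetric]
  proof (intro sum.cong refl)
    fix W assume "W \<in> Pow R"
    hence "card W \<le> card R" using insert.hyps card_mono by auto
    thus "F (Suc (M + card R)) (q + card W) + F (Suc (M + card R)) (Suc (q + card W)) = F (M + card R) (q + card W)"
      using assms(2) by (intro F_step) simp
  qed
  finally show ?case using insert.IH by simp
qed

lemma bond_lump_sets:
  assumes d: "distinct is" and si: "set is \<subseteq> {..<length s}"
  shows "(\<Sum>T\<in>{T \<in> Pow (bond_set k s). proj is (cfg k s T) = v}. F (card (bond_set k s)) (card T))
         = pmf (bond_step k (proj is s)) v"
proof -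
  define B where "B = bond_set k s"
  define B' where "B' = bond_set k (proj is s)"
  define \<Phi> where "\<Phi> T = {p. p < length is \<and> is ! p \<in> T}" for T
  have pc: "proj is (cfg k s T) = cfg k (proj is s) (\<Phi> T)" for T
    unfolding \<Phi>_def by (rule proj_cfg[OF si])
  have B'iff: "p \<in> B' \<longleftrightarrow> p < length is \<and> is ! p \<in> B" for p
    unfolding B'_def B_def by (rule bond_set_proj[OF si])
  have injis: "inj_on (\<lambda>p. is ! p) {..<length is}"
    using d by (simp add: inj_on_def nth_eq_iff_index_eq)
  show ?thesis
  proof (cases "v \<in> cfg k (proj is s) ` Pow B'")
    case False
    have "{T \<in> Pow B. proj is (cfg k s T) = v} = {}"
    proof (rule ccontr)
      assume "{T \<in> Pow B. proj is (cfg k s T) = v} \<noteq> {}"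
      then obtain T where "proj is (cfg k s T) = v" by blast
      hence "v = cfg k (proj is s) (\<Phi> T \<inter> B')" using pc cfg_Int unfolding B'_def by metis
      thus False using False by blast
    qed
    hence e: "{T \<in> Pow (bond_set k s). proj is (cfg k s T) = v} = {}" unfolding B_def .
    show ?thesis unfolding e using pmf_bond_not[OF False[unfolded B'_def]] by simp
  next
    case True
    then obtain T' where T': "T' \<subseteq> B'" "v = cfg k (proj is s) T'" by blast
    define Q where "Q = (\<lambda>p. is ! p) ` T'"
    define R where "R = B - set is"
    have T'sub: "T' \<subseteq> {..<length is}" using T' B'iff by auto
    have cond: "proj is (cfg k s T) = v \<longleftrightarrow> T \<inter> set is = Q" if TB: "T \<subseteq> B" for T
    proof -
      have "proj is (cfg k s T) = v \<longleftrightarrow> \<Phi> T \<inter> B' = T'"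
        unfolding pc T'(2) cfg_eq_iff B'_def[symmetric] using T'(1) by blast
      also have "\<dots> \<longleftrightarrow> T \<inter> set is = Q"
      proof
        assume h: "\<Phi> T \<inter> B' = T'"
        show "T \<inter> set is = Q"
        proof
          show "T \<inter> set is \<subseteq> Q"
          proof
            fix x assume x: "x \<in> T \<inter> set is"
            then obtain p where p: "p < length is" "x = is ! p" by (auto simp: in_set_conv_nth)
            hence "p \<in> \<Phi> T \<inter> B'" using x TB B'iff unfolding \<Phi>_def by auto
            thus "x \<in> Q" using h p unfolding Q_def by auto
          qed
          show "Q \<subseteq> T \<inter> set is"
            using h T'sub unfolding Q_def \<Phi>_def by auto
        qed
      next
        assume h: "T \<inter> set is = Q"
        show "\<Phi> T \<inter> B' = T'"
        proof
          show "\<Phi> T \<inter> B' \<subseteq> T'"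
          proof
            fix p assume p: "p \<in> \<Phi> T \<inter> B'"
            hence "is ! p \<in> Q" using h unfolding \<Phi>_def by auto
            then obtain p' where "p' \<in> T'" "is ! p = is ! p'" unfolding Q_def by auto
            moreover have "p < length is" using p unfolding \<Phi>_def by auto
            ultimately show "p \<in> T'" using injis T'sub by (metis inj_onD lessThan_iff subsetD)
          qed
          show "T' \<subseteq> \<Phi> T \<inter> B'"
            using h T' T'sub unfolding \<Phi>_def Q_def by auto
        qed
      qed
      finally show ?thesis .
    qed
    have QB: "Q \<subseteq> B \<inter> set is" using T' T'sub B'iff unfolding Q_def by auto
    have finB: "finite B" unfolding B_def by simp
    have finR: "finite R" unfolding R_def using finB by simp
    have setEq: "{T \<in> Pow B. proj is (cfg k s T) = v} = (\<lambda>W. Q \<union> W) ` Pow R"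
    proof (intro set_eqI iffI)
      fix T assume "T \<in> {T \<in> Pow B. proj is (cfg k s T) = v}"
      hence TB: "T \<subseteq> B" and TQ: "T \<inter> set is = Q" using cond by auto
      have "T = Q \<union> (T - set is)" using TQ by blast
      moreover have "T - set is \<in> Pow R" using TB unfolding R_def by auto
      ultimately show "T \<in> (\<lambda>W. Q \<union> W) ` Pow R" by blast
    next
      fix T assume "T \<in> (\<lambda>W. Q \<union> W) ` Pow R"
      then obtain W where W: "W \<subseteq> R" "T = Q \<union> W" by blast
      have TB: "T \<subseteq> B" using W QB unfolding R_def by auto
      have "T \<inter> set is = Q" using W QB unfolding R_def by auto
      thus "T \<in> {T \<in> Pow B. proj is (cfg k s T) = v}" using TB cond by auto
    qed
    have QR: "Q \<inter> R = {}" using QB unfolding R_def by auto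
    have injQ: "inj_on (\<lambda>W. Q \<union> W) (Pow R)"
    proof (rule inj_onI)
      fix W W' assume "W \<in> Pow R" "W' \<in> Pow R" "Q \<union> W = Q \<union> W'"
      hence "W \<subseteq> R" "W' \<subseteq> R" "Q \<union> W = Q \<union> W'" by auto
      thus "W = W'" using QR by (metis Int_Un_distrib2 Int_absorb1 Int_commute Un_empty_left)
    qed
    have finQ: "finite Q" unfolding Q_def using finite_subset[OF T'sub] by simp
    have cQ: "card Q = card T'"
      unfolding Q_def by (rule card_image) (rule inj_on_subset[OF injis T'sub])
    have B1: "(\<lambda>p. is ! p) ` B' = B \<inter> set is"
    proof
      show "(\<lambda>p. is ! p) ` B' \<subseteq> B \<inter> set is"
      proof
        fix x assume "x \<in> (\<lambda>p. is ! p) ` B'"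
        then obtain p where p: "p \<in> B'" "x = is ! p" by blast
        hence "p < length is" "is ! p \<in> B" using B'iff by blast+
        thus "x \<in> B \<inter> set is" using p(2) nth_mem by blast
      qed
      show "B \<inter> set is \<subseteq> (\<lambda>p. is ! p) ` B'"
      proof
        fix x assume x: "x \<in> B \<inter> set is"
        then obtain p where p: "p < length is" "x = is ! p" by (auto simp: in_set_conv_nth)
        hence "p \<in> B'" using x B'iff by blast
        thus "x \<in> (\<lambda>p. is ! p) ` B'" using p(2) by blast
      qed
    qed
    have B'sub: "B' \<subseteq> {..<length is}" using B'iff by auto
    have cB1: "card (B \<inter> set is) = card B'"
      unfolding B1[symmetric] by (rule card_image) (rule inj_on_subset[OF injis B'sub])
    have cB: "card B = card B' + card R"
    proof -
      have "B = (B \<inter> set is) \<union> R" "(B \<inter> set is) \<inter> R = {}" unfolding R_def by auto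
      hence "card B = card (B \<inter> set is) + card R"
        using finB finR card_Un_disjoint[of "B \<inter> set is" R] by simp
      thus ?thesis using cB1 by simp
    qed
    have finB': "finite B'" using finite_subset[OF B'sub] by simp
    have cT'B': "card T' \<le> card B'" using card_mono[OF finB' T'(1)] .
    have "(\<Sum>T\<in>{T \<in> Pow B. proj is (cfg k s T) = v}. F (card B) (card T))
        = (\<Sum>W\<in>Pow R. F (card B) (card (Q \<union> W)))"
      unfolding setEq by (simp add: sum.reindex[OF injQ])
    also have "\<dots> = (\<Sum>W\<in>Pow R. F (card B' + card R) (card T' + card W))"
    proof (intro sum.cong refl)
      fix W assume "W \<in> Pow R"
      hence "card (Q \<union> W) = card Q + card W"
        using finQ finR QR by (intro card_Un_disjoint) (auto intro: finite_subset)
      thus "F (card B) (card (Q \<union> W)) = F (card B' + card R) (card T' + card W)"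
        using cQ cB by simp
    qed
    also have "\<dots> = F (card B') (card T')" by (rule F_sum_Pow[OF finR cT'B'])
    also have "\<dots> = pmf (bond_step k (proj is s)) v"
      unfolding T'(2) B'_def by (rule pmf_bond_cfg[symmetric]) (use T'(1) B'_def in simp)
    finally show ?thesis unfolding B_def .
  qed
qed

lemma finite_sites[simp]: "finite (sites L)" by (simp add: sites_def)

lemma finite_states[simp]: "finite (states L n)"
proof -
  have "states L n = {xs. set xs \<subseteq> sites L \<and> length xs = n}" by (auto simp: states_def)
  thus ?thesis using finite_lists_length_eq[OF finite_sites] by simp
qed

lemma S_in_sites: "- int L \<le> k \<Longrightarrow> k \<le> int L \<Longrightarrow> S k \<in> sites L"
  by (simp add: sites_def)

lemma Dm_in_sites[simp]: "Dm \<in> sites L" and Dp_in_sites[simp]: "Dp \<in> sites L"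
  by (simp_all add: sites_def)

lemma states_nth: "s \<in> states L n \<Longrightarrow> i < n \<Longrightarrow> s ! i \<in> sites L"
  by (auto simp: states_def)

lemma states_length: "s \<in> states L n \<Longrightarrow> length s = n"
  by (simp add: states_def)

lemma in_statesI: "length s = n \<Longrightarrow> (\<And>i. i < n \<Longrightarrow> s ! i \<in> sites L) \<Longrightarrow> s \<in> states L n"
  by (auto simp: states_def in_set_conv_nth)

lemma cfg_in_states:
  assumes "s \<in> states L n" "- int L \<le> k" "k < int L"
  shows "cfg k s T \<in> states L n"
proof (rule in_statesI)
  show "length (cfg k s T) = n" using assms states_length by simp
  fix i assume "i < n"
  thus "cfg k s T ! i \<in> sites L"
    using assms states_length[OF assms(1)] states_nth[OF assms(1)] S_in_sites[of L k] S_in_sites[of L "k+1"]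
    by (simp add: nth_cfg)
qed

lemma proj_states:
  assumes "s \<in> states L n" "set is \<subseteq> {..<n}"
  shows "proj is s \<in> states L (length is)"
proof (rule in_statesI)
  fix p assume p: "p < length is"
  hence "is ! p < n" using assms(2) nth_mem by fastforce
  thus "proj is s ! p \<in> sites L" using p states_nth[OF assms(1)] by simp
qed simp

lemma absorb_left_states: "s \<in> states L n \<Longrightarrow> absorb_left L s \<in> states L n"
  by (rule in_statesI) (auto simp: absorb_left_def states_length states_nth)

lemma absorb_right_states: "s \<in> states L n \<Longrightarrow> absorb_right L s \<in> states L n"
  by (rule in_statesI) (auto simp: absorb_right_def states_length states_nth)

lemma proj_absorb_left: "proj is (absorb_left L s) = absorb_left L (proj is s)"
  if "set is \<subseteq> {..<length s}"
proof -
  have "\<forall>i\<in>set is. i < length s" using that by auto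
  thus ?thesis by (simp add: proj_def absorb_left_def)
qed

lemma proj_absorb_right: "proj is (absorb_right L s) = absorb_right L (proj is s)"
  if "set is \<subseteq> {..<length s}"
proof -
  have "\<forall>i\<in>set is. i < length s" using that by auto
  thus ?thesis by (simp add: proj_def absorb_right_def)
qed

lemma cfg_inj: "inj_on (cfg k s) (Pow (bond_set k s))"
  by (rule inj_onI) (auto simp: cfg_eq_iff)

lemma bond_lump:
  assumes s: "s \<in> states L n" and si: "set is \<subseteq> {..<n}" and d: "distinct is"
    and k: "- int L \<le> k" "k < int L"
  shows "(\<Sum>u\<in>{u \<in> states L n. proj is u = v}. pmf (bond_step k s) u) = pmf (bond_step k (proj is s)) v"
proof -
  define C where "C = cfg k s ` Pow (bond_set k s)"
  have Cs: "C \<subseteq> states L n" unfolding C_def using cfg_in_states[OF s k] by auto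
  have "(\<Sum>u\<in>{u \<in> states L n. proj is u = v}. pmf (bond_step k s) u)
      = (\<Sum>u\<in>{u \<in> C. proj is u = v}. pmf (bond_step k s) u)"
    apply (rule sum.mono_neutral_right) using Cs by (auto simp: C_def) (meson pmf_bond_not)
  also have "{u \<in> C. proj is u = v} = cfg k s ` {T \<in> Pow (bond_set k s). proj is (cfg k s T) = v}"
    unfolding C_def by blast
  also have "(\<Sum>u\<in>\<dots>. pmf (bond_step k s) u)
      = (\<Sum>T\<in>{T \<in> Pow (bond_set k s). proj is (cfg k s T) = v}. pmf (bond_step k s) (cfg k s T))"
  proof -
    have ij: "inj_on (cfg k s) {T \<in> Pow (bond_set k s). proj is (cfg k s T) = v}"
      by (rule inj_on_subset[OF cfg_inj]) blast
    show ?thesis using sum.reindex[OF ij, of "pmf (bond_step k s)"] by (simp add: comp_def)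
  qed
  also have "\<dots> = (\<Sum>T\<in>{T \<in> Pow (bond_set k s). proj is (cfg k s T) = v}. F (card (bond_set k s)) (card T))"
    by (intro sum.cong refl pmf_bond_cfg) blast
  also have "\<dots> = pmf (bond_step k (proj is s)) v"
    by (rule bond_lump_sets[OF d]) (use si states_length[OF s] in simp)
  finally show ?thesis .
qed

lemma indicator_lump:
  assumes "c \<in> states L n" "c' = proj is c"
  shows "(\<Sum>u\<in>{u \<in> states L n. proj is u = v}. (if c = u then 1 else 0 :: real)) = (if c' = v then 1 else 0)"
  using assms by simp

lemma step_lump:
  assumes s: "s \<in> states L n" and si: "set is \<subseteq> {..<n}" and d: "distinct is"
  shows "(\<Sum>u\<in>{u \<in> states L n. proj is u = v}. step_kernel L A B a b s u) = step_kernel L A B a b (proj is s) v"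
proof -
  define U where "U = {u \<in> states L n. proj is u = v}"
  have fU: "finite U" unfolding U_def by simp
  have sl: "set is \<subseteq> {..<length s}" using si states_length[OF s] by simp
  have b: "(\<Sum>u\<in>U. \<Sum>k\<in>{- int L .. int L - 1}. pmf (bond_step k s) u)
        = (\<Sum>k\<in>{- int L .. int L - 1}. pmf (bond_step k (proj is s)) v)"
    unfolding U_def by (subst sum.swap) (intro sum.cong refl bond_lump[OF s si d], auto)
  have l: "(\<Sum>u\<in>U. (if absorb_left L s = u then 1 else 0 :: real)) = (if absorb_left L (proj is s) = v then 1 else 0)"
    unfolding U_def using absorb_left_states[OF s] proj_absorb_left[OF sl] by simp
  have r: "(\<Sum>u\<in>U. (if absorb_right L s = u then 1 else 0 :: real)) = (if absorb_right L (proj is s) = v then 1 else 0)"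
    unfolding U_def using absorb_right_states[OF s] proj_absorb_right[OF sl] by simp
  show ?thesis
    unfolding U_def[symmetric] step_kernel_def sum_divide_distrib[symmetric] sum.distrib
      sum_distrib_left[symmetric] b l r ..
qed

lemma kp_lump:
  assumes s: "s \<in> states L n" and si: "set is \<subseteq> {..<n}" and d: "distinct is"
  shows "(\<Sum>u\<in>{u \<in> states L n. proj is u = v}. kernel_pow L A B a b j s u) = kernel_pow L A B a b j (proj is s) v"
  using s
proof (induction j arbitrary: s v)
  case 0
  then show ?case by simp
next
  case (Suc j)
  have ls: "length s = n" using Suc.prems states_length by blast
  have pst: "\<And>w. w \<in> states L n \<Longrightarrow> proj is w \<in> states L (length is)" using proj_states si by blast
  have "(\<Sum>u\<in>{u \<in> states L n. proj is u = v}. kernel_pow L A B a b (Suc j) s u)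
      = (\<Sum>w\<in>states L n. step_kernel L A B a b s w * (\<Sum>u\<in>{u \<in> states L n. proj is u = v}. kernel_pow L A B a b j w u))"
    by (simp add: ls sum_distrib_left) (rule sum.swap)
  also have "\<dots> = (\<Sum>w\<in>states L n. step_kernel L A B a b s w * kernel_pow L A B a b j (proj is w) v)"
    by (intro sum.cong refl) (simp add: Suc.IH)
  also have "\<dots> = (\<Sum>v'\<in>states L (length is). \<Sum>w\<in>{w \<in> states L n. proj is w = v'}. step_kernel L A B a b s w * kernel_pow L A B a b j (proj is w) v)"
    by (rule sum.group[symmetric]) (use pst in auto)
  also have "\<dots> = (\<Sum>v'\<in>states L (length is). (\<Sum>w\<in>{w \<in> states L n. proj is w = v'}. step_kernel L A B a b s w) * kernel_pow L A B a b j v' v)"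
    by (intro sum.cong refl) (simp add: sum_distrib_right)
  also have "\<dots> = (\<Sum>v'\<in>states L (length is). step_kernel L A B a b (proj is s) v' * kernel_pow L A B a b j v' v)"
    by (intro sum.cong refl) (simp add: step_lump[OF Suc.prems si d])
  also have "\<dots> = kernel_pow L A B a b (Suc j) (proj is s) v" by simp
  finally show ?case .
qed

lemma states_0: "states L 0 = {[]}" by (auto simp: states_def)

lemma bond_step_Nil: "bond_step k [] = return_pmf []"
proof -
  have "(\<lambda>(U, \<zeta>). bond_move k [] U \<zeta>) = (\<lambda>_. [])" by (auto simp: bond_move_def)
  thus ?thesis by (simp add: bond_step_def Let_def)
qed

definition rA where "rA L A a = A / real L powr a"

lemma total_rate_eq: "total_rate L A B a b = 2 * real L + rA L A a + rA L B b"
  by (simp add: total_rate_def rA_def)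

lemma rA_pos: "L > 0 \<Longrightarrow> A > 0 \<Longrightarrow> rA L A a > 0" by (simp add: rA_def)

lemma card_bonds: "card {- int L .. int L - 1} = 2 * L" by simp

lemma step_Nil:
  assumes "L > 0" "A > 0" "B > 0"
  shows "step_kernel L A B a b [] [] = 1"
proof -
  have R: "total_rate L A B a b > 0" using assms rA_pos[of L A a] rA_pos[of L B b] total_rate_eq by simp
  have "step_kernel L A B a b [] [] = (2 * real L + rA L A a + rA L B b) / total_rate L A B a b"
    unfolding step_kernel_def by (simp add: bond_step_Nil absorb_left_def absorb_right_def rA_def)
  thus ?thesis using R total_rate_eq by simp
qed

lemma kp_Nil:
  assumes "L > 0" "A > 0" "B > 0"
  shows "kernel_pow L A B a b j [] [] = 1"
  by (induction j) (simp_all add: states_0 step_Nil[OF assms])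

lemma proj_Nil[simp]: "proj [] s = []" by (simp add: proj_def)

lemma kp_stoch:
  assumes "L > 0" "A > 0" "B > 0" "s \<in> states L n"
  shows "(\<Sum>u\<in>states L n. kernel_pow L A B a b j s u) = 1"
proof -
  have "(\<Sum>u\<in>{u \<in> states L n. proj [] u = []}. kernel_pow L A B a b j s u) = kernel_pow L A B a b j (proj [] s) []"
    by (rule kp_lump[OF assms(4)]) simp_all
  thus ?thesis using kp_Nil[OF assms(1-3)] by simp
qed

lemma step_stoch:
  assumes "L > 0" "A > 0" "B > 0" "s \<in> states L n"
  shows "(\<Sum>u\<in>states L n. step_kernel L A B a b s u) = 1"
proof -
  have "(\<Sum>u\<in>{u \<in> states L n. proj [] u = []}. step_kernel L A B a b s u) = step_kernel L A B a b (proj [] s) []"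
    by (rule step_lump[OF assms(4)]) simp_all
  thus ?thesis using step_Nil[OF assms(1-3)] by simp
qed

lemma step_nonneg:
  assumes "L > 0" "A > 0" "B > 0"
  shows "step_kernel L A B a b s u \<ge> 0"
proof -
  have R: "total_rate L A B a b > 0" using assms rA_pos[of L A a] rA_pos[of L B b] total_rate_eq by simp
  have "A / real L powr a \<ge> 0" "B / real L powr b \<ge> 0" using assms by simp_all
  thus ?thesis unfolding step_kernel_def using R
    by (intro divide_nonneg_pos add_nonneg_nonneg sum_nonneg) auto
qed

lemma kp_nonneg:
  assumes "L > 0" "A > 0" "B > 0"
  shows "kernel_pow L A B a b j s u \<ge> 0"
  by (induction j arbitrary: s) (auto intro!: sum_nonneg mult_nonneg_nonneg step_nonneg[OF assms])

lemma kp_le1: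
  assumes "L > 0" "A > 0" "B > 0" "s \<in> states L n"
  shows "kernel_pow L A B a b j s u \<le> 1"
  using assms(4)
proof (induction j arbitrary: s)
  case 0 then show ?case by simp
next
  case (Suc j)
  have ls: "length s = n" using Suc.prems states_length by blast
  have "kernel_pow L A B a b (Suc j) s u \<le> (\<Sum>w\<in>states L n. step_kernel L A B a b s w * 1)"
    unfolding kernel_pow.simps ls
    by (intro sum_mono mult_left_mono Suc.IH step_nonneg[OF assms(1-3)])
  also have "\<dots> = 1" using step_stoch[OF assms(1-3) Suc.prems] by simp
  finally show ?case .
qed

lemma trans_summable:
  assumes "L > 0" "A > 0" "B > 0" "s \<in> states L n"
  shows "summable (\<lambda>j. exp (- total_rate L A B a b * t) * (total_rate L A B a b * t) ^ j / fact j
            * kernel_pow L A B a b j s u)"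
proof (rule summable_comparison_test'[where N=0])
  let ?x = "total_rate L A B a b * t" and ?e = "exp (- total_rate L A B a b * t)"
  show "summable (\<lambda>j. ?e * (inverse (fact j) * \<bar>?x\<bar> ^ j))"
    by (rule summable_mult, rule summable_exp)
  fix j :: nat assume "j \<ge> 0"
  have k: "\<bar>kernel_pow L A B a b j s u\<bar> \<le> 1"
    using kp_nonneg[OF assms(1-3)] kp_le1[OF assms] by (simp add: abs_le_iff)
  have "norm (?e * ?x ^ j / fact j * kernel_pow L A B a b j s u)
      = ?e * (inverse (fact j) * \<bar>?x\<bar> ^ j) * \<bar>kernel_pow L A B a b j s u\<bar>"
    by (simp add: abs_mult power_abs divide_inverse)
  also have "\<dots> \<le> ?e * (inverse (fact j) * \<bar>?x\<bar> ^ j) * 1"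
    by (intro mult_left_mono k) simp
  finally show "norm (?e * ?x ^ j / fact j * kernel_pow L A B a b j s u)
      \<le> ?e * (inverse (fact j) * \<bar>?x\<bar> ^ j)" by simp
qed

lemma trans_lump:
  assumes pos: "L > 0" "A > 0" "B > 0" and s: "s \<in> states L n" and si: "set is \<subseteq> {..<n}" and d: "distinct is"
  shows "(\<Sum>u\<in>{u \<in> states L n. proj is u = v}. trans_prob L A B a b t s u) = trans_prob L A B a b t (proj is s) v"
proof -
  let ?c = "\<lambda>j. exp (- total_rate L A B a b * t) * (total_rate L A B a b * t) ^ j / fact j"
  have "(\<Sum>u\<in>{u \<in> states L n. proj is u = v}. trans_prob L A B a b t s u)
      = (\<Sum>j. \<Sum>u\<in>{u \<in> states L n. proj is u = v}. ?c j * kernel_pow L A B a b j s u)"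
    unfolding trans_prob_def by (rule suminf_sum[symmetric]) (rule trans_summable[OF pos s])
  also have "\<dots> = (\<Sum>j. ?c j * kernel_pow L A B a b j (proj is s) v)"
  proof -
    have h: "\<And>j. (\<Sum>u\<in>{u \<in> states L n. proj is u = v}. ?c j * kernel_pow L A B a b j s u) = ?c j * kernel_pow L A B a b j (proj is s) v"
      by (simp only: sum_distrib_left[symmetric] kp_lump[OF s si d])
    show ?thesis by (simp only: h)
  qed
  finally show ?thesis unfolding trans_prob_def .
qed

lemma proj_eq: "(\<lambda>s. map (\<lambda>i. s ! i) is) = proj is" by (simp add: proj_def fun_eq_iff)

lemma fdd_lump:
  assumes pos: "L > 0" "A > 0" "B > 0" and si: "set is \<subseteq> {..<n}" and d: "distinct is"
  shows "s \<in> states L n \<Longrightarrow>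
    (\<Sum>ss\<in>{ss. length ss = length obs \<and> set ss \<subseteq> states L n \<and> map (proj is) ss = map snd obs}.
        fdd L A B a b s t0 (zip (map fst obs) ss)) = fdd L A B a b (proj is s) t0 obs"
proof (induction obs arbitrary: s t0)
  case Nil
  have "{ss. length ss = 0 \<and> set ss \<subseteq> states L n \<and> map (proj is) ss = []} = {[]}" by auto
  then show ?case by simp
next
  case (Cons ob obs)
  obtain t v where ob: "ob = (t, v)" by fastforce
  define SS where "SS = {ss. length ss = length obs \<and> set ss \<subseteq> states L n \<and> map (proj is) ss = map snd obs}"
  define U where "U = {u \<in> states L n. proj is u = v}"
  have eq: "{ss. length ss = length (ob # obs) \<and> set ss \<subseteq> states L n \<and> map (proj is) ss = map snd (ob # obs)}
      = (\<lambda>(u, ss). u # ss) ` (U \<times> SS)"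
  proof (intro set_eqI iffI)
    fix ss assume "ss \<in> {ss. length ss = length (ob # obs) \<and> set ss \<subseteq> states L n \<and> map (proj is) ss = map snd (ob # obs)}"
    then obtain u ss' where "ss = u # ss'" "length ss' = length obs" "u \<in> states L n" "set ss' \<subseteq> states L n"
        "proj is u = v" "map (proj is) ss' = map snd obs"
      using ob by (cases ss) auto
    thus "ss \<in> (\<lambda>(u, ss). u # ss) ` (U \<times> SS)" unfolding U_def SS_def by force
  next
    fix ss assume "ss \<in> (\<lambda>(u, ss). u # ss) ` (U \<times> SS)"
    thus "ss \<in> {ss. length ss = length (ob # obs) \<and> set ss \<subseteq> states L n \<and> map (proj is) ss = map snd (ob # obs)}"
      unfolding U_def SS_def using ob by auto
  qed
  have inj: "inj_on (\<lambda>(u, ss). u # ss) (U \<times> SS)" by (auto simp: inj_on_def)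
  have "(\<Sum>ss\<in>(\<lambda>(u, ss). u # ss) ` (U \<times> SS). fdd L A B a b s t0 (zip (map fst (ob # obs)) ss))
      = (\<Sum>(u, ss)\<in>U \<times> SS. fdd L A B a b s t0 (zip (map fst (ob # obs)) (u # ss)))"
    by (subst sum.reindex[OF inj]) (simp add: case_prod_unfold)
  also have "\<dots> = (\<Sum>u\<in>U. \<Sum>ss\<in>SS. trans_prob L A B a b (t - t0) s u * fdd L A B a b u t (zip (map fst obs) ss))"
    unfolding sum.cartesian_product[symmetric] using ob by simp
  also have "\<dots> = (\<Sum>u\<in>U. trans_prob L A B a b (t - t0) s u * fdd L A B a b (proj is u) t obs)"
    by (intro sum.cong refl) (simp add: sum_distrib_left[symmetric] SS_def Cons.IH U_def)
  also have "\<dots> = (\<Sum>u\<in>U. trans_prob L A B a b (t - t0) s u) * fdd L A B a b v t obs"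
    unfolding sum_distrib_right U_def by (intro sum.cong refl) auto
  also have "\<dots> = fdd L A B a b (proj is s) t0 (ob # obs)"
    unfolding U_def trans_lump[OF pos Cons.prems si d] using ob by simp
  finally show ?case unfolding eq .
qed

theorem part1:
  fixes L :: nat and A B a b :: real and x :: "int list" and "is" :: "nat list"
  assumes "L > 0" and "A > 0" and "B > 0"
    and "\<forall>xi \<in> set x. - int L \<le> xi \<and> xi \<le> int L"
    and "distinct is" and "\<forall>i \<in> set is. i < length x"
  shows "sub_fdd L A B a b x is obs = fdd L A B a b (map S (map (\<lambda>i. x ! i) is)) 0 obs"
proof -
  have st: "map S x \<in> states L (length x)"
    using assms(4) by (auto simp: states_def sites_def)
  have si: "set is \<subseteq> {..<length x}" using assms(6) by auto
  have pr: "proj is (map S x) = map S (map (\<lambda>i. x ! i) is)"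
    using assms(6) by (simp add: proj_def)
  show ?thesis
    unfolding sub_fdd_def proj_eq pr[symmetric]
    by (rule fdd_lump[OF assms(1-3) si assms(5) st])
qed

lemma poisson_w_sums:
  fixes R t :: real
  shows "(\<lambda>j. exp (- R * t) * (R * t) ^ j / fact j) sums 1"
proof -
  have "(\<lambda>j. exp (- R * t) * ((R * t) ^ j /\<^sub>R fact j)) sums (exp (- R * t) * exp (R * t))"
    by (rule sums_mult[OF exp_converges])
  moreover have "exp (- R * t) * exp (R * t) = 1" by (simp add: exp_add[symmetric])
  moreover have "(\<lambda>j. exp (- R * t) * ((R * t) ^ j /\<^sub>R fact j)) = (\<lambda>j. exp (- R * t) * (R * t) ^ j / fact j)"
    by (simp add: fun_eq_iff divide_inverse mult.commute)
  ultimately show ?thesis by simp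
qed

lemma poisson_w_tendsto0:
  fixes R :: real
  assumes R: "R > 0"
  shows "((\<lambda>t. exp (- R * t) * (R * t) ^ j / fact j) \<longlongrightarrow> 0) at_top"
proof -
  have f: "filterlim (\<lambda>t. R * t) at_top at_top"
    by (rule filterlim_tendsto_pos_mult_at_top[OF tendsto_const R filterlim_ident])
  have "((\<lambda>t. (R * t) ^ j / exp (R * t)) \<longlongrightarrow> 0) at_top"
    using filterlim_compose[OF tendsto_power_div_exp_0 f] by (simp add: o_def)
  hence "((\<lambda>t. (R * t) ^ j / exp (R * t) / fact j) \<longlongrightarrow> 0 / fact j) at_top"
    by (intro tendsto_divide tendsto_const) simp_all
  moreover have "(\<lambda>t. (R * t) ^ j / exp (R * t) / fact j) = (\<lambda>t. exp (- R * t) * (R * t) ^ j / fact j)"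
    by (simp add: fun_eq_iff exp_minus divide_inverse mult.commute)
  ultimately show ?thesis by simp
qed

lemma poisson_limit:
  fixes R :: real and a :: "nat \<Rightarrow> real"
  assumes R: "R > 0" and lim: "a \<longlonglongrightarrow> q" and b0: "\<And>j. 0 \<le> a j" and b1: "\<And>j. a j \<le> 1"
  shows "((\<lambda>t. \<Sum>j. exp (- R * t) * (R * t) ^ j / fact j * a j) \<longlongrightarrow> q) at_top"
proof (rule tendstoI)
  fix e :: real assume e: "e > 0"
  define w where "w t j = exp (- R * t) * (R * t) ^ j / fact j" for t j
  define M where "M = 1 + \<bar>q\<bar>"
  have M: "M > 0" unfolding M_def by simp
  have aM: "\<bar>a j - q\<bar> \<le> M" for j using b0[of j] b1[of j] unfolding M_def by linarith
  obtain J where J: "\<And>j. j \<ge> J \<Longrightarrow> \<bar>a j - q\<bar> < e / 2"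
    using lim e unfolding LIMSEQ_iff by (metis half_gt_zero real_norm_def)
  have "((\<lambda>t. \<Sum>j<J. w t j) \<longlongrightarrow> (\<Sum>j<J. 0)) at_top"
    unfolding w_def by (intro tendsto_sum poisson_w_tendsto0[OF R])
  hence "((\<lambda>t. \<Sum>j<J. w t j) \<longlongrightarrow> 0) at_top" by simp
  hence ev1: "eventually (\<lambda>t. (\<Sum>j<J. w t j) < e / (4 * M)) at_top"
    using e M by (simp add: order_tendsto_iff)
  have ev2: "eventually (\<lambda>t::real. t \<ge> 0) at_top" by (rule eventually_ge_at_top)
  show "eventually (\<lambda>t. dist (\<Sum>j. exp (- R * t) * (R * t) ^ j / fact j * a j) q < e) at_top"
    using ev1 ev2
  proof eventually_elim
    case (elim t)
    have w0: "w t j \<ge> 0" for j unfolding w_def using elim(2) R by simp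
    have ws: "(\<lambda>j. w t j) sums 1" unfolding w_def by (rule poisson_w_sums)
    have sa: "summable (\<lambda>j. w t j * a j)"
    proof (rule summable_comparison_test'[where N=0])
      show "summable (\<lambda>j. w t j)" using ws by (simp add: sums_summable)
      fix j :: nat assume "j \<ge> 0"
      show "norm (w t j * a j) \<le> w t j" using w0[of j] b0[of j] b1[of j]
        by (simp add: abs_mult mult_left_le)
    qed
    have hs: "(\<lambda>j. w t j * (a j - q)) sums ((\<Sum>j. w t j * a j) - q)"
    proof -
      have "(\<lambda>j. w t j * a j - w t j * q) sums ((\<Sum>j. w t j * a j) - 1 * q)"
        by (intro sums_diff summable_sums[OF sa] sums_mult2[OF ws])
      thus ?thesis by (simp add: right_diff_distrib)
    qed
    define g where "g j = w t j * (e / 2) + (if j \<in> {..<J} then w t j * M else 0)" for j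
    have gs: "g sums (1 * (e / 2) + (\<Sum>j\<in>{..<J}. w t j * M))"
      unfolding g_def by (intro sums_add sums_mult2[OF ws] sums_If_finite_set) simp
    have hg: "\<bar>w t j * (a j - q)\<bar> \<le> g j" for j
    proof (cases "j < J")
      case True
      have "\<bar>w t j * (a j - q)\<bar> \<le> w t j * M" using w0[of j] aM[of j] by (simp add: abs_mult mult_left_mono)
      also have "\<dots> \<le> g j" using True w0[of j] e unfolding g_def by simp
      finally show ?thesis .
    next
      case False
      have "\<bar>a j - q\<bar> \<le> e / 2" using J[of j] False by simp
      hence "w t j * \<bar>a j - q\<bar> \<le> w t j * (e / 2)" using w0[of j] by (rule mult_left_mono)
      have "\<bar>w t j * (a j - q)\<bar> \<le> w t j * (e / 2)" using w0[of j] \<open>w t j * \<bar>a j - q\<bar> \<le> w t j * (e / 2)\<close> by (simp add: abs_mult)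
      also have "\<dots> \<le> g j" using False unfolding g_def by simp
      finally show ?thesis .
    qed
    have le1: "(\<Sum>j. w t j * a j) - q \<le> 1 * (e / 2) + (\<Sum>j\<in>{..<J}. w t j * M)"
      using sums_le[OF _ hs gs] hg by (meson abs_le_D1)
    have le2: "- (1 * (e / 2) + (\<Sum>j\<in>{..<J}. w t j * M)) \<le> (\<Sum>j. w t j * a j) - q"
      using sums_le[OF _ sums_minus[OF gs] hs] hg by (meson abs_le_D2 minus_le_iff)
    have "(\<Sum>j\<in>{..<J}. w t j * M) = M * (\<Sum>j<J. w t j)" by (simp add: sum_distrib_left mult.commute)
    also have "\<dots> < M * (e / (4 * M))" using elim(1) M by (intro mult_strict_left_mono) simp_all
    also have "\<dots> = e / 4" using M by simp
    finally have "(\<Sum>j\<in>{..<J}. w t j * M) < e / 4" .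
    hence "\<bar>(\<Sum>j. w t j * a j) - q\<bar> < e" using le1 le2 e by linarith
    thus ?case unfolding w_def dist_real_def .
  qed
qed

lemma mult_delta_r: "x * (if P then 1 else 0) = (if P then x else (0::real))" by simp
lemma mult_delta_l: "(if P then 1 else 0) * x = (if P then x else (0::real))" by simp

lemma step_out:
  assumes s: "s \<in> states L n" and u: "u \<notin> states L n"
  shows "step_kernel L A B a b s u = 0"
proof -
  have "pmf (bond_step k s) u = 0" if "k \<in> {- int L .. int L - 1}" for k
  proof (rule pmf_bond_not)
    show "u \<notin> cfg k s ` Pow (bond_set k s)" using cfg_in_states[OF s, of k] that u by auto
  qed
  moreover have "absorb_left L s \<noteq> u" "absorb_right L s \<noteq> u"
    using absorb_left_states[OF s] absorb_right_states[OF s] u by auto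
  ultimately show ?thesis unfolding step_kernel_def by simp
qed

lemma kp_right:
  assumes "s \<in> states L n"
  shows "kernel_pow L A B a b (Suc j) s u = (\<Sum>w\<in>states L n. kernel_pow L A B a b j s w * step_kernel L A B a b w u)"
  using assms
proof (induction j arbitrary: s)
  case 0
  have ls: "length s = n" using 0 states_length by blast
  show ?case
  proof (cases "u \<in> states L n")
    case True
    then show ?thesis using 0 by (simp add: ls mult_delta_r mult_delta_l)
  next
    case False
    then show ?thesis using 0 step_out[OF 0 False] by (simp add: ls mult_delta_r mult_delta_l)
  qed
next
  case (Suc j)
  have ls: "length s = n" using Suc.prems states_length by blast
  have lw: "\<And>w. w \<in> states L n \<Longrightarrow> length w = n" using states_length by blast
  have "kernel_pow L A B a b (Suc (Suc j)) s u
      = (\<Sum>w\<in>states L n. step_kernel L A B a b s w * (\<Sum>w'\<in>states L n. kernel_pow L A B a b j w w' * step_kernel L A B a b w' u))"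
    by (simp only: kernel_pow.simps ls) (intro sum.cong refl, simp only: Suc.IH[symmetric] kernel_pow.simps lw)
  also have "\<dots> = (\<Sum>w'\<in>states L n. (\<Sum>w\<in>states L n. step_kernel L A B a b s w * kernel_pow L A B a b j w w') * step_kernel L A B a b w' u)"
    by (simp add: sum_distrib_left sum_distrib_right mult.assoc) (rule sum.swap)
  also have "\<dots> = (\<Sum>w'\<in>states L n. kernel_pow L A B a b (Suc j) s w' * step_kernel L A B a b w' u)"
    by (simp add: ls)
  finally show ?case .
qed

lemma kp_chap:
  assumes "s \<in> states L n"
  shows "kernel_pow L A B a b (j + D) s u = (\<Sum>w\<in>states L n. kernel_pow L A B a b j s w * kernel_pow L A B a b D w u)"
  using assms
proof (induction j arbitrary: s)
  case 0
  then show ?case by (simp add: mult_delta_l)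
next
  case (Suc j)
  have ls: "length s = n" using Suc.prems states_length by blast
  have "kernel_pow L A B a b (Suc j + D) s u
      = (\<Sum>w\<in>states L n. step_kernel L A B a b s w * (\<Sum>w'\<in>states L n. kernel_pow L A B a b j w w' * kernel_pow L A B a b D w' u))"
    by (simp add: ls Suc.IH)
  also have "\<dots> = (\<Sum>w'\<in>states L n. (\<Sum>w\<in>states L n. step_kernel L A B a b s w * kernel_pow L A B a b j w w') * kernel_pow L A B a b D w' u)"
    by (simp add: sum_distrib_left sum_distrib_right mult.assoc) (rule sum.swap)
  also have "\<dots> = (\<Sum>w'\<in>states L n. kernel_pow L A B a b (Suc j) s w' * kernel_pow L A B a b D w' u)"
    by (simp add: ls)
  finally show ?case .
qed

lemma absorbing_states: "set e \<subseteq> {Dm, Dp} \<Longrightarrow> e \<in> states L (length e)"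
  by (auto simp: states_def)

lemma bond_set_absorbing: "set e \<subseteq> {Dm, Dp} \<Longrightarrow> bond_set k e = {}"
  by (auto simp: bond_set_def dest!: nth_mem)

lemma bond_step_absorbing:
  assumes "set e \<subseteq> {Dm, Dp}"
  shows "bond_step k e = return_pmf e"
proof -
  have "(\<lambda>(U, \<zeta>). bond_move k e U \<zeta>) = (\<lambda>_. e)"
    using bond_set_absorbing[OF assms, of k] by (auto simp: bond_move_def fun_eq_iff map_nth)
  thus ?thesis by (simp add: bond_step_def Let_def)
qed

lemma absorb_left_absorbing: "set e \<subseteq> {Dm, Dp} \<Longrightarrow> absorb_left L e = e"
  unfolding absorb_left_def by (rule map_idI) auto

lemma absorb_right_absorbing: "set e \<subseteq> {Dm, Dp} \<Longrightarrow> absorb_right L e = e"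
  unfolding absorb_right_def by (rule map_idI) auto

lemma R_pos: "L > 0 \<Longrightarrow> A > 0 \<Longrightarrow> B > 0 \<Longrightarrow> total_rate L A B a b > 0"
  using rA_pos[of L A a] rA_pos[of L B b] total_rate_eq[of L A B a b] by simp

lemma step_absorbing:
  assumes "L > 0" "A > 0" "B > 0" "set e \<subseteq> {Dm, Dp}"
  shows "step_kernel L A B a b e e = 1"
proof -
  have "step_kernel L A B a b e e = (2 * real L + rA L A a + rA L B b) / total_rate L A B a b"
    unfolding step_kernel_def
    by (simp add: bond_step_absorbing[OF assms(4)] absorb_left_absorbing[OF assms(4)]
        absorb_right_absorbing[OF assms(4)] rA_def)
  moreover have "2 * real L + rA L A a + rA L B b > 0" using rA_pos[of L A a] rA_pos[of L B b] assms by simp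
  ultimately show ?thesis using total_rate_eq[of L A B a b] by simp
qed

lemma kp_mono:
  assumes pos: "L > 0" "A > 0" "B > 0" and e: "set e \<subseteq> {Dm, Dp}" and s: "s \<in> states L (length e)"
  shows "kernel_pow L A B a b j s e \<le> kernel_pow L A B a b (Suc j) s e"
proof -
  have "kernel_pow L A B a b j s e = kernel_pow L A B a b j s e * step_kernel L A B a b e e"
    using step_absorbing[OF pos e] by simp
  also have "\<dots> \<le> (\<Sum>w\<in>states L (length e). kernel_pow L A B a b j s w * step_kernel L A B a b w e)"
    by (rule member_le_sum[of e _ "\<lambda>w. kernel_pow L A B a b j s w * step_kernel L A B a b w e"])
       (use absorbing_states[OF e] kp_nonneg[OF pos] step_nonneg[OF pos] in auto)
  also have "\<dots> = kernel_pow L A B a b (Suc j) s e" by (rule kp_right[OF s, symmetric])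
  finally show ?thesis .
qed

lemma kp_incseq:
  assumes pos: "L > 0" "A > 0" "B > 0" and e: "set e \<subseteq> {Dm, Dp}" and s: "s \<in> states L (length e)"
  shows "incseq (\<lambda>j. kernel_pow L A B a b j s e)"
  using kp_mono[OF assms] by (simp add: incseq_SucI)

lemma pL_limit:
  assumes pos: "L > 0" "A > 0" "B > 0"
    and x: "\<forall>xi \<in> set x. - int L \<le> xi \<and> xi \<le> int L"
    and e: "set e \<subseteq> {Dm, Dp}" "length e = length x"
  shows "(\<lambda>j. kernel_pow L A B a b j (map S x) e) \<longlonglongrightarrow> p_L L A B a b x e"
proof -
  have s: "map S x \<in> states L (length e)"
  proof (rule in_statesI)
    fix i assume "i < length e"
    hence "x ! i \<in> set x" using e(2) by simp
    thus "map S x ! i \<in> sites L" using x \<open>i < length e\<close> e(2) S_in_sites[of L "x ! i"] by simp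
  qed (use e(2) in simp)
  have "\<forall>j. kernel_pow L A B a b j (map S x) e \<le> 1" using kp_le1[OF pos s] by blast
  then obtain q where q: "(\<lambda>j. kernel_pow L A B a b j (map S x) e) \<longlonglongrightarrow> q"
    using incseq_convergent[OF kp_incseq[OF pos e(1) s]] by metis
  have "((\<lambda>t. trans_prob L A B a b t (map S x) e) \<longlongrightarrow> q) at_top"
    unfolding trans_prob_def
    by (rule poisson_limit[OF R_pos[OF pos] q]) (use kp_nonneg[OF pos] kp_le1[OF pos s] in auto)
  hence "p_L L A B a b x e = q" unfolding p_L_def by (rule tendsto_Lim[rotated]) simp
  thus ?thesis using q by simp
qed

lemma states1: "states L (Suc 0) = (\<lambda>z. [z]) ` sites L"
proof (intro set_eqI iffI)
  fix u assume "u \<in> states L (Suc 0)"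
  then obtain z where "u = [z]" "z \<in> sites L" by (auto simp: states_def length_Suc_conv)
  thus "u \<in> (\<lambda>z. [z]) ` sites L" by blast
qed (auto simp: states_def)

lemma F11: "F 1 1 = 1 / 2" by (simp add: F_def)

lemma step_left:
  assumes pos: "L > 0" "A > 0" "B > 0" and k: "- int L < k" "k \<le> int L"
  shows "step_kernel L A B a b [S k] [S (k - 1)] \<ge> 1 / (2 * total_rate L A B a b)"
proof -
  have bs: "bond_set (k - 1) [S k] = {0}" by (auto simp: bond_set_def)
  have c: "cfg (k - 1) [S k] {0} = [S (k - 1)]" by (simp add: cfg_def bs)
  have p: "pmf (bond_step (k - 1) [S k]) [S (k - 1)] = 1 / 2"
    using pmf_bond_cfg[of "{0}" "k - 1" "[S k]"] by (simp add: bs c F_def)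
  have R: "total_rate L A B a b > 0" by (rule R_pos[OF pos])
  have "1 / 2 \<le> (\<Sum>k'\<in>{- int L .. int L - 1}. pmf (bond_step k' [S k]) [S (k - 1)])"
    unfolding p[symmetric] by (rule member_le_sum) (use k in auto)
  also have "\<dots> \<le> (\<Sum>k'\<in>{- int L .. int L - 1}. pmf (bond_step k' [S k]) [S (k - 1)])
      + A / real L powr a * (if absorb_left L [S k] = [S (k - 1)] then 1 else 0)
      + B / real L powr b * (if absorb_right L [S k] = [S (k - 1)] then 1 else 0)"
    using pos by simp
  finally have N: "1 / 2 \<le> (\<Sum>k'\<in>{- int L .. int L - 1}. pmf (bond_step k' [S k]) [S (k - 1)])
      + A / real L powr a * (if absorb_left L [S k] = [S (k - 1)] then 1 else 0)
      + B / real L powr b * (if absorb_right L [S k] = [S (k - 1)] then 1 else 0)" .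
  have "1 / 2 / total_rate L A B a b \<le> step_kernel L A B a b [S k] [S (k - 1)]"
    unfolding step_kernel_def by (rule divide_right_mono[OF N]) (use R in simp)
  thus ?thesis by simp
qed

lemma step_absorb:
  assumes pos: "L > 0" "A > 0" "B > 0"
  shows "step_kernel L A B a b [S (- int L)] [Dm] \<ge> rA L A a / total_rate L A B a b"
proof -
  have R: "total_rate L A B a b > 0" by (rule R_pos[OF pos])
  have "rA L A a \<le> (\<Sum>k'\<in>{- int L .. int L - 1}. pmf (bond_step k' [S (- int L)]) [Dm])
      + A / real L powr a * (if absorb_left L [S (- int L)] = [Dm] then 1 else 0)
      + B / real L powr b * (if absorb_right L [S (- int L)] = [Dm] then 1 else 0)"
    using pos by (simp add: absorb_left_def rA_def sum_nonneg)
  thus ?thesis unfolding step_kernel_def using R by (simp add: divide_right_mono)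
qed

definition c0 :: "nat \<Rightarrow> real \<Rightarrow> real \<Rightarrow> real \<Rightarrow> real \<Rightarrow> real" where
  "c0 L A B a b = min (1 / 2) (rA L A a) / total_rate L A B a b"

lemma c0_props:
  assumes pos: "L > 0" "A > 0" "B > 0"
  shows "c0 L A B a b > 0" "c0 L A B a b \<le> 1 / (2 * total_rate L A B a b)"
    "c0 L A B a b \<le> rA L A a / total_rate L A B a b"
proof -
  have R: "total_rate L A B a b > 0" by (rule R_pos[OF pos])
  have r: "rA L A a > 0" using rA_pos[of L A a] pos by simp
  show "c0 L A B a b > 0" unfolding c0_def using R r by simp
  have "min (1/2) (rA L A a) / total_rate L A B a b \<le> (1/2) / total_rate L A B a b"
    using R by (intro divide_right_mono) simp_all
  thus "c0 L A B a b \<le> 1 / (2 * total_rate L A B a b)" unfolding c0_def by simp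
  show "c0 L A B a b \<le> rA L A a / total_rate L A B a b"
    unfolding c0_def using R by (intro divide_right_mono) simp_all
qed

lemma kp_fix:
  assumes pos: "L > 0" "A > 0" "B > 0" and e: "set e \<subseteq> {Dm, Dp}"
  shows "kernel_pow L A B a b j e e \<ge> 1"
proof -
  have "incseq (\<lambda>j. kernel_pow L A B a b j e e)" by (rule kp_incseq[OF pos e absorbing_states[OF e]])
  hence "kernel_pow L A B a b 0 e e \<le> kernel_pow L A B a b j e e" using incseqD by blast
  thus ?thesis by simp
qed

lemma reach:
  assumes pos: "L > 0" "A > 0" "B > 0"
  shows "- int L \<le> k \<Longrightarrow> k \<le> int L \<Longrightarrow> nat (k + int L) < j \<Longrightarrow>
    kernel_pow L A B a b j [S k] [Dm] \<ge> c0 L A B a b ^ j"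
proof (induction j arbitrary: k)
  case 0
  then show ?case by simp
next
  case (Suc j)
  let ?c = "c0 L A B a b"
  have c: "?c > 0" "?c \<le> 1 / (2 * total_rate L A B a b)" "?c \<le> rA L A a / total_rate L A B a b"
    using c0_props[OF pos] by auto
  have expand: "kernel_pow L A B a b (Suc j) [S k] [Dm]
      = (\<Sum>w\<in>states L (Suc 0). step_kernel L A B a b [S k] w * kernel_pow L A B a b j w [Dm])" by simp
  obtain w0 where w0: "w0 \<in> states L (Suc 0)" "step_kernel L A B a b [S k] w0 \<ge> ?c"
      "kernel_pow L A B a b j w0 [Dm] \<ge> ?c ^ j"
  proof (cases "k = - int L")
    case True
    have "[Dm] \<in> states L (Suc 0)" by (simp add: states_def)
    moreover have "step_kernel L A B a b [S k] [Dm] \<ge> ?c" using order_trans[OF c(3) step_absorb[OF pos]] True by simp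
    moreover have "kernel_pow L A B a b j [Dm] [Dm] \<ge> ?c ^ j"
    proof -
      have R1: "total_rate L A B a b \<ge> 1"
        using total_rate_eq[of L A B a b] rA_pos[of L A a] rA_pos[of L B b] pos by simp
      have "1 / (2 * total_rate L A B a b) \<le> 1" using R1 by (simp add: field_simps)
      hence "?c \<le> 1" using c(2) by linarith
      hence "?c ^ j \<le> 1 ^ j" using c(1) by (intro power_mono) auto
      also have "\<dots> \<le> kernel_pow L A B a b j [Dm] [Dm]" using kp_fix[OF pos, of "[Dm]"] by simp
      finally show ?thesis .
    qed
    ultimately show ?thesis using that by blast
  next
    case False
    hence k: "- int L < k" using Suc.prems by simp
    have "[S (k - 1)] \<in> states L (Suc 0)" using k Suc.prems by (simp add: states_def sites_def)
    moreover have "step_kernel L A B a b [S k] [S (k - 1)] \<ge> ?c"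
      using order_trans[OF c(2) step_left[OF pos k Suc.prems(2)]] by simp
    moreover have "kernel_pow L A B a b j [S (k - 1)] [Dm] \<ge> ?c ^ j"
      by (rule Suc.IH) (use k Suc.prems in auto)
    ultimately show ?thesis using that by blast
  qed
  have "?c ^ Suc j = ?c * ?c ^ j" by simp
  also have "\<dots> \<le> step_kernel L A B a b [S k] w0 * kernel_pow L A B a b j w0 [Dm]"
    using w0 c by (intro mult_mono) auto
  also have "\<dots> \<le> (\<Sum>w\<in>states L (Suc 0). step_kernel L A B a b [S k] w * kernel_pow L A B a b j w [Dm])"
    by (rule member_le_sum[OF w0(1)])
       (use kp_nonneg[OF pos] step_nonneg[OF pos] in auto)
  finally show ?case using expand by simp
qed

declare kernel_pow.simps(2)[simp del]

lemma sites_split: "sites L = S ` {- int L .. int L} \<union> {Dm, Dp}" by (simp add: sites_def)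

lemma MD:
  assumes pos: "L > 0" "A > 0" "B > 0" and w: "w \<in> states L (Suc 0)"
  shows "c0 L A B a b ^ Suc (2 * L) + (1 - c0 L A B a b ^ Suc (2 * L)) *
           ((if w = [Dm] then 1 else 0) + (if w = [Dp] then 1 else 0))
         \<le> kernel_pow L A B a b (Suc (2 * L)) w [Dm] + kernel_pow L A B a b (Suc (2 * L)) w [Dp]"
proof -
  let ?D = "Suc (2 * L)" and ?c = "c0 L A B a b ^ Suc (2 * L)"
  obtain z where z: "w = [z]" "z \<in> sites L" using w states1 by blast
  have nn: "\<And>j u v. kernel_pow L A B a b j u v \<ge> 0" using kp_nonneg[OF pos] by blast
  show ?thesis
  proof (cases "z \<in> {Dm, Dp}")
    case True
    show ?thesis
    proof (cases "z = Dm")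
      case True
      have "kernel_pow L A B a b ?D [Dm] [Dm] \<ge> 1" using kp_fix[OF pos, of "[Dm]"] by simp
      thus ?thesis using z True nn[of ?D "[Dm]" "[Dp]"] by simp
    next
      case False
      hence zp: "z = Dp" using \<open>z \<in> {Dm, Dp}\<close> by simp
      have "kernel_pow L A B a b ?D [Dp] [Dp] \<ge> 1" using kp_fix[OF pos, of "[Dp]"] by simp
      thus ?thesis using z zp nn[of ?D "[Dp]" "[Dm]"] by simp
    qed
  next
    case False
    then obtain k where k: "z = S k" "- int L \<le> k" "k \<le> int L" using z(2) sites_split by auto
    have "kernel_pow L A B a b ?D [S k] [Dm] \<ge> ?c"
      by (rule reach[OF pos k(2,3)]) (use k in simp)
    thus ?thesis using z k nn[of ?D "[S k]" "[Dp]"] by simp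
  qed
qed

lemma M_step:
  assumes pos: "L > 0" "A > 0" "B > 0" and s: "s \<in> states L (Suc 0)"
  shows "c0 L A B a b ^ Suc (2 * L) + (1 - c0 L A B a b ^ Suc (2 * L)) *
           (kernel_pow L A B a b j s [Dm] + kernel_pow L A B a b j s [Dp])
         \<le> kernel_pow L A B a b (j + Suc (2 * L)) s [Dm] + kernel_pow L A B a b (j + Suc (2 * L)) s [Dp]"
proof -
  let ?D = "Suc (2 * L)" and ?c = "c0 L A B a b ^ Suc (2 * L)"
  let ?k = "kernel_pow L A B a b"
  define d1 where "d1 w = (if w = [Dm] then 1 else 0 :: real)" for w
  define d2 where "d2 w = (if w = [Dp] then 1 else 0 :: real)" for w
  have inS: "[Dm] \<in> states L (Suc 0)" "[Dp] \<in> states L (Suc 0)" by (simp_all add: states_def)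
  have s1: "(\<Sum>w\<in>states L (Suc 0). ?k j s w * d1 w) = ?k j s [Dm]"
    unfolding d1_def using inS by (simp add: mult_delta_r)
  have s2: "(\<Sum>w\<in>states L (Suc 0). ?k j s w * d2 w) = ?k j s [Dp]"
    unfolding d2_def using inS by (simp add: mult_delta_r)
  have st: "(\<Sum>w\<in>states L (Suc 0). ?k j s w) = 1" by (rule kp_stoch[OF pos s])
  have "?c + (1 - ?c) * (?k j s [Dm] + ?k j s [Dp])
      = ?c * (\<Sum>w\<in>states L (Suc 0). ?k j s w) + (1 - ?c) * ((\<Sum>w\<in>states L (Suc 0). ?k j s w * d1 w) + (\<Sum>w\<in>states L (Suc 0). ?k j s w * d2 w))"
    unfolding s1 s2 st by simp
  also have "\<dots> = (\<Sum>w\<in>states L (Suc 0). ?k j s w * (?c + (1 - ?c) * (d1 w + d2 w)))"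
    by (simp add: sum_distrib_left sum.distrib[symmetric] algebra_simps)
  also have "\<dots> \<le> (\<Sum>w\<in>states L (Suc 0). ?k j s w * (?k ?D w [Dm] + ?k ?D w [Dp]))"
    by (intro sum_mono mult_left_mono kp_nonneg[OF pos]) (use MD[OF pos] in \<open>simp add: d1_def d2_def\<close>)
  also have "\<dots> = ?k (j + ?D) s [Dm] + ?k (j + ?D) s [Dp]"
    unfolding kp_chap[OF s] by (simp only: distrib_left sum.distrib)
  finally show ?thesis .
qed

lemma M_le1:
  assumes pos: "L > 0" "A > 0" "B > 0" and s: "s \<in> states L (Suc 0)"
  shows "kernel_pow L A B a b j s [Dm] + kernel_pow L A B a b j s [Dp] \<le> 1"
proof -
  have "kernel_pow L A B a b j s [Dm] + kernel_pow L A B a b j s [Dp] = (\<Sum>u\<in>{[Dm], [Dp]}. kernel_pow L A B a b j s u)"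
    by simp
  also have "\<dots> \<le> (\<Sum>u\<in>states L (Suc 0). kernel_pow L A B a b j s u)"
    by (rule sum_mono2[OF finite_states]) (auto simp: states_def kp_nonneg[OF pos])
  also have "\<dots> = 1" by (rule kp_stoch[OF pos s])
  finally show ?thesis .
qed

lemma M_lim:
  assumes pos: "L > 0" "A > 0" "B > 0" and s: "s \<in> states L (Suc 0)"
  shows "(\<lambda>j. kernel_pow L A B a b j s [Dm] + kernel_pow L A B a b j s [Dp]) \<longlonglongrightarrow> 1"
proof -
  let ?M = "\<lambda>j. kernel_pow L A B a b j s [Dm] + kernel_pow L A B a b j s [Dp]"
  let ?c = "c0 L A B a b ^ Suc (2 * L)"
  have sD: "s \<in> states L (length [Dm])" "s \<in> states L (length [Dp])" using s by simp_all
  have inc: "incseq ?M"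
    by (rule incseq_SucI, rule add_mono) (rule kp_mono[OF pos _ sD(1)], simp, rule kp_mono[OF pos _ sD(2)], simp)
  have b: "\<forall>j. ?M j \<le> 1" using M_le1[OF pos s] by blast
  obtain l where l: "?M \<longlonglongrightarrow> l" "\<forall>j. ?M j \<le> l" using incseq_convergent[OF inc b] by blast
  have l1: "l \<le> 1" by (rule LIMSEQ_le_const2[OF l(1)]) (use b in blast)
  have c: "?c > 0" using c0_props(1)[OF pos] by (rule zero_less_power)
  have t1: "(\<lambda>j. ?M (j + Suc (2 * L))) \<longlonglongrightarrow> l" by (rule LIMSEQ_ignore_initial_segment[OF l(1)])
  have t2: "(\<lambda>j. ?c + (1 - ?c) * ?M j) \<longlonglongrightarrow> ?c + (1 - ?c) * l"
    by (intro tendsto_intros l(1))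
  have "?c + (1 - ?c) * l \<le> l"
    by (rule LIMSEQ_le[OF t2 t1]) (use M_step[OF pos s] in blast)
  hence "?c * (1 - l) \<le> 0" by (simp add: algebra_simps)
  hence "1 - l \<le> 0"
  proof (rule contrapos_pp)
    assume "\<not> 1 - l \<le> 0"
    hence "?c * (1 - l) > 0" using c by (intro mult_pos_pos) simp_all
    thus "\<not> ?c * (1 - l) \<le> 0" by simp
  qed
  hence "l = 1" using l1 by simp
  thus ?thesis using l(1) by simp
qed

lemma I_lim:
  assumes pos: "L > 0" "A > 0" "B > 0" and k0: "- int L \<le> k0" "k0 \<le> int L"
  shows "(\<lambda>j. \<Sum>k\<in>{- int L .. int L}. kernel_pow L A B a b j [S k0] [S k]) \<longlonglongrightarrow> 0"
proof -
  let ?k = "kernel_pow L A B a b"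
  have s: "[S k0] \<in> states L (Suc 0)" using k0 by (simp add: states_def sites_def)
  have eq: "(\<Sum>k\<in>{- int L .. int L}. ?k j [S k0] [S k]) = 1 - (?k j [S k0] [Dm] + ?k j [S k0] [Dp])" for j
  proof -
    have inj1: "inj_on (\<lambda>z. [z]) (sites L)" by (simp add: inj_on_def)
    have "1 = (\<Sum>u\<in>states L (Suc 0). ?k j [S k0] u)" using kp_stoch[OF pos s] by simp
    also have "\<dots> = (\<Sum>z\<in>sites L. ?k j [S k0] [z])"
      unfolding states1 by (simp add: sum.reindex[OF inj1])
    also have "\<dots> = (\<Sum>z\<in>S ` {- int L .. int L}. ?k j [S k0] [z]) + (\<Sum>z\<in>{Dm, Dp}. ?k j [S k0] [z])"
      unfolding sites_split by (rule sum.union_disjoint) auto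
    also have "(\<Sum>z\<in>S ` {- int L .. int L}. ?k j [S k0] [z]) = (\<Sum>k\<in>{- int L .. int L}. ?k j [S k0] [S k])"
      by (simp add: sum.reindex inj_on_def)
    finally show ?thesis by simp
  qed
  have "(\<lambda>j. 1 - (?k j [S k0] [Dm] + ?k j [S k0] [Dp])) \<longlonglongrightarrow> 1 - 1"
    by (intro tendsto_intros M_lim[OF pos s])
  thus ?thesis unfolding eq by simp
qed

lemma map_nth_take: "i \<le> length u \<Longrightarrow> map (\<lambda>j. u ! j) [0..<i] = take i u"
  by (rule nth_equalityI) auto

lemma map_nth_drop: "map (\<lambda>j. u ! j) [Suc i..<length u] = drop (Suc i) u"
  by (rule nth_equalityI) auto

lemma proj_del:
  assumes "length u = n" "i < n"
  shows "proj ([0..<i] @ [Suc i..<n]) u = take i u @ drop (Suc i) u"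
  using assms map_nth_take[where i=i and u=u] map_nth_drop[where i=i and u=u] by (simp add: proj_def)

lemma fiber_del:
  assumes e: "set eps \<subseteq> {Dm, Dp}" "length eps = n" and i: "i < n"
  shows "{u \<in> states L n. take i u @ drop (Suc i) u = take i eps @ drop (Suc i) eps} = (\<lambda>z. eps[i := z]) ` sites L"
proof (intro set_eqI iffI)
  fix u assume u: "u \<in> {u \<in> states L n. take i u @ drop (Suc i) u = take i eps @ drop (Suc i) eps}"
  hence lu: "length u = n" and eq: "take i u @ drop (Suc i) u = take i eps @ drop (Suc i) eps"
    using states_length by auto
  have t: "take i u = take i eps" using eq lu e(2) i by (simp add: append_eq_append_conv)
  have d: "drop (Suc i) u = drop (Suc i) eps" using eq t by simp
  have "u = eps[i := u ! i]"
  proof (rule nth_equalityI)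
    show "length u = length (eps[i := u ! i])" using lu e(2) by simp
    fix p assume p: "p < length u"
    show "u ! p = eps[i := u ! i] ! p"
    proof (cases "p < i")
      case True
      have "take i u ! p = take i eps ! p" using t by simp
      thus ?thesis using True by simp
    next
      case False
      show ?thesis
      proof (cases "p = i")
        case True then show ?thesis using lu e(2) p by simp
      next
        case False
        hence pi: "p > i" using \<open>\<not> p < i\<close> by simp
        have "drop (Suc i) u ! (p - Suc i) = drop (Suc i) eps ! (p - Suc i)" using d by simp
        thus ?thesis using pi p lu e(2) by simp
      qed
    qed
  qed
  moreover have "u ! i \<in> sites L" using u i states_nth by blast
  ultimately show "u \<in> (\<lambda>z. eps[i := z]) ` sites L" by blast
next
  fix u assume "u \<in> (\<lambda>z. eps[i := z]) ` sites L"
  then obtain z where z: "z \<in> sites L" "u = eps[i := z]" by blast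
  have "u \<in> states L n"
  proof (rule in_statesI)
    show "length u = n" using z e by simp
    fix p assume "p < n"
    hence "p < length eps" using e by simp
    hence "eps ! p \<in> {Dm, Dp}" using e(1) nth_mem by blast
    thus "u ! p \<in> sites L" using z \<open>p < length eps\<close> by (cases "p = i") (auto simp: sites_def)
  qed
  moreover have "take i u @ drop (Suc i) u = take i eps @ drop (Suc i) eps"
    using z by simp
  ultimately show "u \<in> {u \<in> states L n. take i u @ drop (Suc i) u = take i eps @ drop (Suc i) eps}" by blast
qed

theorem part2:
  fixes L :: nat and A B a b :: real and x :: "int list"
  assumes pos: "L > 0" "A > 0" "B > 0"
    and x: "\<forall>xi \<in> set x. - int L \<le> xi \<and> xi \<le> int L"
    and i: "i < length x" and e: "length eps = length x" "set eps \<subseteq> {Dm, Dp}"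
  shows "p_L L A B a b x (eps[i := Dm]) + p_L L A B a b x (eps[i := Dp])
          = p_L L A B a b (take i x @ drop (Suc i) x) (take i eps @ drop (Suc i) eps)"
proof -
  let ?k = "kernel_pow L A B a b"
  define n where "n = length x"
  define s where "s = map S x"
  define "is" where "is = [0..<i] @ [Suc i..<n]"
  define x' where "x' = take i x @ drop (Suc i) x"
  define e' where "e' = take i eps @ drop (Suc i) eps"
  have s: "s \<in> states L n"
  proof (rule in_statesI)
    fix p assume "p < n"
    hence "x ! p \<in> set x" unfolding n_def by simp
    thus "s ! p \<in> sites L" using x \<open>p < n\<close> S_in_sites[of L "x ! p"] unfolding s_def n_def by simp
  qed (simp add: s_def n_def)
  have si: "set is \<subseteq> {..<n}" and d: "distinct is" unfolding is_def using i n_def by auto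
  have ps: "proj is s = map S x'"
    unfolding is_def x'_def s_def using proj_del[of "map S x" n i] i n_def by (simp add: take_map drop_map)
  have en: "length eps = n" using e n_def by simp
  have fib: "{u \<in> states L n. proj is u = e'} = (\<lambda>z. eps[i := z]) ` sites L"
  proof -
    have "{u \<in> states L n. proj is u = e'} = {u \<in> states L n. take i u @ drop (Suc i) u = take i eps @ drop (Suc i) eps}"
    proof (intro set_eqI)
      fix u
      show "u \<in> {u \<in> states L n. proj is u = e'} \<longleftrightarrow> u \<in> {u \<in> states L n. take i u @ drop (Suc i) u = take i eps @ drop (Suc i) eps}"
      proof (cases "u \<in> states L n")
        case True
        hence "proj is u = take i u @ drop (Suc i) u"
          unfolding is_def using proj_del[of u n i] i n_def states_length by simp
        thus ?thesis using True unfolding e'_def by simp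
      qed simp
    qed
    thus ?thesis using fiber_del[OF e(2) en] i n_def by simp
  qed
  have injz: "inj_on (\<lambda>z. eps[i := z]) (sites L)"
    by (rule inj_onI) (metis en i n_def nth_list_update_eq)
  define r where "r j = (\<Sum>k\<in>{- int L .. int L}. ?k j s (eps[i := S k]))" for j
  have decomp: "?k j (map S x') e' = ?k j s (eps[i := Dm]) + ?k j s (eps[i := Dp]) + r j" for j
  proof -
    have "?k j (map S x') e' = (\<Sum>u\<in>{u \<in> states L n. proj is u = e'}. ?k j s u)"
      using kp_lump[OF s si d, where v=e' and A=A and B=B and a=a and b=b and j=j] ps by simp
    also have "\<dots> = (\<Sum>z\<in>sites L. ?k j s (eps[i := z]))"
      unfolding fib by (simp add: sum.reindex[OF injz])
    also have "\<dots> = (\<Sum>z\<in>S ` {- int L .. int L}. ?k j s (eps[i := z])) + (\<Sum>z\<in>{Dm, Dp}. ?k j s (eps[i := z]))"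
      unfolding sites_split by (rule sum.union_disjoint) auto
    also have "(\<Sum>z\<in>S ` {- int L .. int L}. ?k j s (eps[i := z])) = r j"
      unfolding r_def by (simp add: sum.reindex inj_on_def)
    finally show ?thesis by simp
  qed
  have xi: "- int L \<le> x ! i" "x ! i \<le> int L" using x i by auto
  have r0: "0 \<le> r j" for j unfolding r_def by (intro sum_nonneg kp_nonneg[OF pos])
  have r1: "r j \<le> (\<Sum>k\<in>{- int L .. int L}. ?k j [S (x ! i)] [S k])" for j
    unfolding r_def
  proof (rule sum_mono)
    fix k assume k: "k \<in> {- int L .. int L}"
    have psi: "proj [i] s = [S (x ! i)]" using i by (simp add: proj_def s_def)
    have mem: "eps[i := S k] \<in> {u \<in> states L n. proj [i] u = [S k]}"
    proof -
      have "eps[i := S k] \<in> (\<lambda>z. eps[i := z]) ` sites L" using k by (auto simp: sites_def)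
      hence "eps[i := S k] \<in> states L n" using fiber_del[OF e(2) en] i n_def by blast
      moreover have "proj [i] (eps[i := S k]) = [S k]" using en i n_def by (simp add: proj_def)
      ultimately show ?thesis by blast
    qed
    have "?k j s (eps[i := S k]) \<le> (\<Sum>u\<in>{u \<in> states L n. proj [i] u = [S k]}. ?k j s u)"
      by (rule member_le_sum[OF mem]) (use kp_nonneg[OF pos] in auto)
    also have "\<dots> = ?k j (proj [i] s) [S k]"
      by (rule kp_lump[OF s]) (use i n_def in auto)
    finally show "?k j s (eps[i := S k]) \<le> ?k j [S (x ! i)] [S k]" using psi by simp
  qed
  have rlim: "r \<longlonglongrightarrow> 0"
    by (rule tendsto_sandwich[OF _ _ tendsto_const I_lim[OF pos xi, where a=a and b=b]]) (use r0 r1 in auto)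
  have l1: "(\<lambda>j. ?k j s (eps[i := Dm])) \<longlonglongrightarrow> p_L L A B a b x (eps[i := Dm])"
    unfolding s_def by (rule pL_limit[OF pos x]) (use e in \<open>auto dest: subsetD[OF set_update_subset_insert]\<close>)
  have l2: "(\<lambda>j. ?k j s (eps[i := Dp])) \<longlonglongrightarrow> p_L L A B a b x (eps[i := Dp])"
    unfolding s_def by (rule pL_limit[OF pos x]) (use e in \<open>auto dest: subsetD[OF set_update_subset_insert]\<close>)
  have x': "\<forall>xi \<in> set x'. - int L \<le> xi \<and> xi \<le> int L"
    using x unfolding x'_def by (auto dest: in_set_takeD in_set_dropD)
  have e'ok: "set e' \<subseteq> {Dm, Dp}" "length e' = length x'"
    using e unfolding e'_def x'_def by (auto dest: in_set_takeD in_set_dropD)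
  have l3: "(\<lambda>j. ?k j (map S x') e') \<longlonglongrightarrow> p_L L A B a b x' e'"
    by (rule pL_limit[OF pos x' e'ok])
  have "(\<lambda>j. ?k j (map S x') e') \<longlonglongrightarrow> p_L L A B a b x (eps[i := Dm]) + p_L L A B a b x (eps[i := Dp]) + 0"
    unfolding decomp by (intro tendsto_add l1 l2 rlim)
  hence "p_L L A B a b x' e' = p_L L A B a b x (eps[i := Dm]) + p_L L A B a b x (eps[i := Dp])"
    using LIMSEQ_unique[OF l3] by simp
  thus ?thesis unfolding x'_def e'_def by simp
qed

theorem proposition4p1:
  fixes L :: nat and A B a b :: real and x :: "int list" and "is" :: "nat list"
  assumes "L > 0" and "A > 0" and "B > 0"
    and "\<forall>xi \<in> set x. - int L \<le> xi \<and> xi \<le> int L"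
    and "distinct is" and "\<forall>i \<in> set is. i < length x" and "length is < length x"
  shows "(\<forall>obs :: (real \<times> site list) list.
            sorted (map fst obs) \<and> (\<forall>t \<in> fst ` set obs. 0 \<le> t) \<longrightarrow>
            sub_fdd L A B a b x is obs
              = fdd L A B a b (map S (map (\<lambda>i. x ! i) is)) 0 obs)
       \<and> (\<forall>i eps. i < length x \<and> length eps = length x \<and> set eps \<subseteq> {Dm, Dp} \<longrightarrow>
            p_L L A B a b x (eps[i := Dm]) + p_L L A B a b x (eps[i := Dp])
              = p_L L A B a b (take i x @ drop (Suc i) x) (take i eps @ drop (Suc i) eps))"
proof -
  have p1: "\<forall>obs :: (real \<times> site list) list.
            sorted (map fst obs) \<and> (\<forall>t \<in> fst ` set obs. 0 \<le> t) \<longrightarrow>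
            sub_fdd L A B a b x is obs
              = fdd L A B a b (map S (map (\<lambda>i. x ! i) is)) 0 obs"
    using part1[OF assms(1-6)] by blast
  have p2: "\<forall>i eps. i < length x \<and> length eps = length x \<and> set eps \<subseteq> {Dm, Dp} \<longrightarrow>
            p_L L A B a b x (eps[i := Dm]) + p_L L A B a b x (eps[i := Dp])
              = p_L L A B a b (take i x @ drop (Suc i) x) (take i eps @ drop (Suc i) eps)"
    using part2[OF assms(1-4)] by blast
  show ?thesis using p1 p2 by blast
qed

end
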